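(* Let $\mathrm{SO}(3)\times\mathrm{SO}(2)$ act on $\Lambda^2_-S^4$. Every point is mapped into the fiber over some ${}^t(x_1,0,0,x_4,0)$ with $x_1,x_4\ge0$. For $p_0=({}^t(x_1,0,0,x_4,0),{}^t(a_1,a_2,a_3))$, the orbit through $p_0$ is diffeomorphic to: $\mathrm{SO}(3)\times\mathrm{SO}(2)$ if $0<x_1<1$, $(a_2,a_3)\ne0$; $S^2\times S^1$ if $0<x_1<1$, $(a_2,a_3)=0$; $(\mathrm{SO}(3)\times\mathrm{SO}(2))/\mathrm{SO}(2)$ if $x_1=1$, $(a_2,a_3)\ne0$, where the $\mathrm{SO}(2)$ is $\{(\mathrm{diag}(1,h),h):h\in\mathrm{SO}(2)\}$; $S^2$ if $x_1=1$, $(a_2,a_3)=0$; $S^2\times S^1$ if $x_1=0$, $(a_1,a_2,a_3)\ne0$; $S^1$ if $x_1=0$, $(a_1,a_2,a_3)=0$.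
   Context: $S^4\subset\mathbb R^5$ is the unit sphere, $\Lambda^2_-S^4$ the bundle of anti-self-dual 2-forms (round metric); $\mathrm{SO}(5)$ acts on $\Lambda^2_-S^4$ by lifting its linear action on $S^4$ to 2-forms ($g\cdot\omega=(g^{-1})^*\omega$); $\mathrm{SO}(3)\times\mathrm{SO}(2)\subset\mathrm{SO}(5)$ is block diagonal acting on $(x_1,x_2,x_3)$ and $(x_4,x_5)$. On $S^4\setminus\{x_5=\pm1\}$ use the frame $e_1=\frac{1}{\sqrt{1-x_5^2}}{}^t(-x_2,x_1,-x_4,x_3,0)$, $e_2=\frac{1}{\sqrt{1-x_5^2}}{}^t(-x_3,x_4,x_1,-x_2,0)$, $e_3=\frac{1}{\sqrt{1-x_5^2}}{}^t(-x_4,-x_3,x_2,x_1,0)$, $e_4=\frac{1}{\sqrt{1-x_5^2}}{}^t(-x_1x_5,-x_2x_5,-x_3x_5,-x_4x_5,1-x_5^2)$ with dual coframe $e^i$, $\omega_1=e^{12}-e^{34}$, $\omega_2=e^{13}-e^{42}$, $\omega_3=e^{14}-e^{23}$; $(x,{}^t(a_1,a_2,a_3))$ denotes $\sum_ia_i\omega_i|_x$. *)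

theory Defs
  imports "HOL-Analysis.Analysis"
begin

primrec Ck_on :: "nat \<Rightarrow> 'a::euclidean_space set \<Rightarrow> ('a \<Rightarrow> 'b::real_normed_vector) \<Rightarrow> bool" where
  "Ck_on 0 U f = continuous_on U f"
| "Ck_on (Suc k) U f = (f differentiable_on U \<and>
      (\<forall>i\<in>Basis. Ck_on k U (\<lambda>x. frechet_derivative f (at x) i)))"

text \<open>A map defined on an arbitrary subset S is smooth if it locally extends to a
  C-infinity map on an open neighbourhood (Milnor's convention).\<close>
definition smooth_map :: "'a::euclidean_space set \<Rightarrow> ('a \<Rightarrow> 'b::euclidean_space) \<Rightarrow> bool" where
  "smooth_map S f \<longleftrightarrow> (\<forall>x\<in>S. \<exists>U g. open U \<and> x \<in> U \<and> (\<forall>k. Ck_on k U g) \<and>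
       (\<forall>y\<in>S \<inter> U. g y = f y))"

definition diffeomorphic_sets :: "'a::euclidean_space set \<Rightarrow> 'b::euclidean_space set \<Rightarrow> bool" where
  "diffeomorphic_sets S T \<longleftrightarrow> (\<exists>f g. f ` S = T \<and> g ` T = S \<and> (\<forall>x\<in>S. g (f x) = x) \<and>
       (\<forall>y\<in>T. f (g y) = y) \<and> smooth_map S f \<and> smooth_map T g)"

text \<open>M is diffeomorphic to the homogeneous space G/H (G a matrix group embedded in a
  Euclidean space with multiplication mult, H a closed subgroup): there is a smooth
  surjection G \<rightarrow> M whose fibres are exactly the cosets gH and which has the universal
  property of the quotient (every smooth right-H-invariant function on G descends to a
  smooth function on M).\<close>
definition diffeomorphic_quotient ::
  "'b::euclidean_space set \<Rightarrow> 'a::euclidean_space set \<Rightarrow> ('a \<Rightarrow> 'a \<Rightarrow> 'a) \<Rightarrow> 'a set \<Rightarrow> bool" where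
  "diffeomorphic_quotient M G gmul H \<longleftrightarrow> (\<exists>\<pi>. smooth_map G \<pi> \<and> \<pi> ` G = M \<and>
     (\<forall>g\<in>G. \<forall>g'\<in>G. \<pi> g = \<pi> g' \<longleftrightarrow> (\<exists>h\<in>H. g' = gmul g h)) \<and>
     (\<forall>f :: 'a \<Rightarrow> real. smooth_map G f \<and> (\<forall>g\<in>G. \<forall>h\<in>H. f (gmul g h) = f g) \<longrightarrow>
        (\<exists>f'. smooth_map M f' \<and> (\<forall>g\<in>G. f' (\<pi> g) = f g))))"

definition SO :: "(real^'n^'n) set" where
  "SO = {A. rotation_matrix A}"

definition blockdiag :: "real^3^3 \<Rightarrow> real^2^2 \<Rightarrow> real^5^5" where
  "blockdiag A B = vector [
     vector [A$1$1, A$1$2, A$1$3, 0, 0],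
     vector [A$2$1, A$2$2, A$2$3, 0, 0],
     vector [A$3$1, A$3$2, A$3$3, 0, 0],
     vector [0, 0, 0, B$1$1, B$1$2],
     vector [0, 0, 0, B$2$1, B$2$2]]"

definition G32 :: "((real^3^3) \<times> (real^2^2)) set" where
  "G32 = SO \<times> SO"

definition mult32 :: "(real^3^3) \<times> (real^2^2) \<Rightarrow> (real^3^3) \<times> (real^2^2) \<Rightarrow> (real^3^3) \<times> (real^2^2)" where
  "mult32 p q = (fst p ** fst q, snd p ** snd q)"

definition diag1 :: "real^2^2 \<Rightarrow> real^3^3" where
  "diag1 h = vector [vector [1, 0, 0], vector [0, h$1$1, h$1$2], vector [0, h$2$1, h$2$2]]"

definition H_diag :: "((real^3^3) \<times> (real^2^2)) set" where
  "H_diag = {(diag1 h, h) | h. h \<in> SO}"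

text \<open>A 2-form on T_x S^4 is represented by a skew 5x5 matrix W with W x = 0,
  via omega(u,v) = u . (W v). The orientation of S^4 is (v1..v4) positive iff
  det[x,v1,..,v4] > 0 (for which omega_1, omega_2, omega_3 below are anti-self-dual).\<close>
definition hodge_star_form :: "real^5 \<Rightarrow> real^5^5 \<Rightarrow> real^5 \<Rightarrow> real^5 \<Rightarrow> real" where
  "hodge_star_form x W u v =
     (\<Sum>d\<in>UNIV. \<Sum>e\<in>UNIV. W$d$e * det (vector [x, u, v, axis d 1, axis e 1] :: real^5^5)) / 2"

definition ASD_bundle :: "((real^5) \<times> (real^5^5)) set" where
  "ASD_bundle = {(x, W). x \<in> sphere 0 1 \<and> transpose W = - W \<and> W *v x = 0 \<and>
       (\<forall>u v. hodge_star_form x W u v = - (u \<bullet> (W *v v)))}"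

text \<open>Action of SO(5): g.(x,omega) = (g x, (g^-1)^* omega), i.e. W \<mapsto> g W g^T.\<close>
definition act :: "real^5^5 \<Rightarrow> (real^5) \<times> (real^5^5) \<Rightarrow> (real^5) \<times> (real^5^5)" where
  "act g p = (g *v fst p, g ** snd p ** transpose g)"

definition orbit32 :: "(real^5) \<times> (real^5^5) \<Rightarrow> ((real^5) \<times> (real^5^5)) set" where
  "orbit32 p = {act (blockdiag A B) p | A B. A \<in> SO \<and> B \<in> SO}"

definition fr1 :: "real^5 \<Rightarrow> real^5" where
  "fr1 x = (1 / sqrt (1 - (x$5)\<^sup>2)) *\<^sub>R vector [- x$2, x$1, - x$4, x$3, 0]"
definition fr2 :: "real^5 \<Rightarrow> real^5" where
  "fr2 x = (1 / sqrt (1 - (x$5)\<^sup>2)) *\<^sub>R vector [- x$3, x$4, x$1, - x$2, 0]"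
definition fr3 :: "real^5 \<Rightarrow> real^5" where
  "fr3 x = (1 / sqrt (1 - (x$5)\<^sup>2)) *\<^sub>R vector [- x$4, - x$3, x$2, x$1, 0]"
definition fr4 :: "real^5 \<Rightarrow> real^5" where
  "fr4 x = (1 / sqrt (1 - (x$5)\<^sup>2)) *\<^sub>R
     vector [- x$1 * x$5, - x$2 * x$5, - x$3 * x$5, - x$4 * x$5, 1 - (x$5)\<^sup>2]"

text \<open>Matrix of e^i wedge e^j (dual coframe = inner product with e_i).\<close>
definition wedge :: "real^5 \<Rightarrow> real^5 \<Rightarrow> real^5^5" where
  "wedge u v = (\<chi> i j. u$i * v$j - v$i * u$j)"

definition om1 :: "real^5 \<Rightarrow> real^5^5" where
  "om1 x = wedge (fr1 x) (fr2 x) - wedge (fr3 x) (fr4 x)"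
definition om2 :: "real^5 \<Rightarrow> real^5^5" where
  "om2 x = wedge (fr1 x) (fr3 x) - wedge (fr4 x) (fr2 x)"
definition om3 :: "real^5 \<Rightarrow> real^5^5" where
  "om3 x = wedge (fr1 x) (fr4 x) - wedge (fr2 x) (fr3 x)"

text \<open>The point (x, t(a1,a2,a3)) = (x, sum a_i omega_i|_x).\<close>
definition fpt :: "real^5 \<Rightarrow> real \<Rightarrow> real \<Rightarrow> real \<Rightarrow> (real^5) \<times> (real^5^5)" where
  "fpt x a1 a2 a3 = (x, a1 *\<^sub>R om1 x + a2 *\<^sub>R om2 x + a3 *\<^sub>R om3 x)"

end

theory Submission
  imports Defs
begin

definition smooth_on :: "'a::euclidean_space set \<Rightarrow> ('a \<Rightarrow> 'b::real_normed_vector) \<Rightarrow> bool" where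
  "smooth_on U f \<longleftrightarrow> (\<forall>k. Ck_on k U f)"

lemma Ck_mono: "Ck_on (Suc k) U f \<Longrightarrow> Ck_on k U f"
proof (induction k arbitrary: f)
  case 0 then show ?case by (simp add: differentiable_imp_continuous_on)
next
  case (Suc k) then show ?case by auto
qed

lemma Ck_Suc_dest:
  assumes "Ck_on (Suc k) U f" "open U" "x \<in> U"
  shows "(f has_derivative frechet_derivative f (at x)) (at x)"
  using assms by (simp add: differentiable_on_eq_differentiable_at frechet_derivative_works[symmetric])

lemma Ck_cong:
  assumes "open U" "\<And>x. x \<in> U \<Longrightarrow> f x = g x" "Ck_on k U f"
  shows "Ck_on k U g"
  using assms
proof (induction k arbitrary: f g)
  case 0
  have "continuous_on U g"
    using continuous_on_cong[of U U f g] 0 by simp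
  then show ?case by simp
next
  case (Suc k)
  have d: "\<And>x. x \<in> U \<Longrightarrow> (f has_derivative frechet_derivative f (at x)) (at x)"
    using Ck_Suc_dest[OF Suc.prems(3) Suc.prems(1)] .
  have d2: "\<And>x. x \<in> U \<Longrightarrow> (g has_derivative frechet_derivative f (at x)) (at x)"
  proof -
    fix x assume x: "x \<in> U"
    show "(g has_derivative frechet_derivative f (at x)) (at x)"
      by (rule has_derivative_transform_within_open[OF d[OF x] \<open>open U\<close> x]) (rule Suc.prems(2))
  qed
  have eq: "\<And>x. x \<in> U \<Longrightarrow> frechet_derivative g (at x) = frechet_derivative f (at x)"
  proof -
    fix x assume x: "x \<in> U"
    show "frechet_derivative g (at x) = frechet_derivative f (at x)"
      using frechet_derivative_at[OF d2[OF x]] by simp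
  qed
  have "g differentiable_on U"
    unfolding differentiable_on_eq_differentiable_at[OF Suc.prems(1)] differentiable_def
    using d2 by blast
  moreover have "\<forall>i\<in>Basis. Ck_on k U (\<lambda>x. frechet_derivative g (at x) i)"
  proof
    fix i :: 'a assume i: "i \<in> Basis"
    have "Ck_on k U (\<lambda>x. frechet_derivative f (at x) i)"
      using Suc.prems(3) i by simp
    then show "Ck_on k U (\<lambda>x. frechet_derivative g (at x) i)"
      using Suc.IH[of "\<lambda>x. frechet_derivative f (at x) i" "\<lambda>x. frechet_derivative g (at x) i"] Suc.prems(1) eq
      by simp
  qed
  ultimately show ?case by simp
qed

lemma Ck_Suc_intro:
  assumes "open U" "\<And>x. x \<in> U \<Longrightarrow> (f has_derivative D x) (at x)"
    "\<And>i. i \<in> Basis \<Longrightarrow> Ck_on k U (\<lambda>x. D x i)"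
  shows "Ck_on (Suc k) U f"
proof -
  have eq: "\<And>x. x \<in> U \<Longrightarrow> frechet_derivative f (at x) = D x"
  proof -
    fix x assume x: "x \<in> U"
    show "frechet_derivative f (at x) = D x"
      using frechet_derivative_at[OF assms(2)[OF x]] by simp
  qed
  have "f differentiable_on U"
    unfolding differentiable_on_eq_differentiable_at[OF assms(1)] differentiable_def
    using assms(2) by blast
  moreover have "\<forall>i\<in>Basis. Ck_on k U (\<lambda>x. frechet_derivative f (at x) i)"
  proof
    fix i :: 'a assume i: "i \<in> Basis"
    show "Ck_on k U (\<lambda>x. frechet_derivative f (at x) i)"
      by (rule Ck_cong[OF assms(1) _ assms(3)[OF i]]) (simp add: eq)
  qed
  ultimately show ?thesis by simp
qed

lemma Ck_Suc_partial:
  assumes "Ck_on (Suc k) U f" "i \<in> Basis"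
  shows "Ck_on k U (\<lambda>x. frechet_derivative f (at x) i)"
  using assms by simp

lemma Ck_const: "open U \<Longrightarrow> Ck_on k U (\<lambda>x. c)"
proof (induction k arbitrary: c)
  case 0 then show ?case by simp
next
  case (Suc k)
  show ?case
    by (rule Ck_Suc_intro[where D="\<lambda>x h. 0"]) (simp_all add: Suc.IH Suc.prems)
qed

lemma Ck_add:
  fixes f g :: "'a::euclidean_space \<Rightarrow> 'b::real_normed_vector"
  assumes "open U"
  shows "Ck_on k U f \<Longrightarrow> Ck_on k U g \<Longrightarrow> Ck_on k U (\<lambda>x. f x + g x)"
proof (induction k arbitrary: f g)
  case 0 then show ?case by (simp add: continuous_on_add)
next
  case (Suc k)
  have df: "\<And>x. x \<in> U \<Longrightarrow> (f has_derivative frechet_derivative f (at x)) (at x)"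
    using Ck_Suc_dest[OF Suc.prems(1) assms(1)] .
  have dg: "\<And>x. x \<in> U \<Longrightarrow> (g has_derivative frechet_derivative g (at x)) (at x)"
    using Ck_Suc_dest[OF Suc.prems(2) assms(1)] .
  show ?case
  proof (rule Ck_Suc_intro[where D="\<lambda>x h. frechet_derivative f (at x) h + frechet_derivative g (at x) h"])
    show "open U" by fact
    fix x assume "x \<in> U"
    then show "((\<lambda>x. f x + g x) has_derivative (\<lambda>h. frechet_derivative f (at x) h + frechet_derivative g (at x) h)) (at x)"
      using has_derivative_add[OF df dg] by blast
  next
    fix i :: 'a assume i: "i \<in> Basis"
    show "Ck_on k U (\<lambda>x. frechet_derivative f (at x) i + frechet_derivative g (at x) i)"
      by (rule Suc.IH[OF Ck_Suc_partial[OF Suc.prems(1) i] Ck_Suc_partial[OF Suc.prems(2) i]])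
  qed
qed

lemma Ck_linear:
  assumes "open U" "bounded_linear L"
  shows "Ck_on k U L"
proof (cases k)
  case 0 then show ?thesis using assms by (simp add: linear_continuous_on)
next
  case (Suc m)
  show ?thesis unfolding Suc
    by (rule Ck_Suc_intro[where D="\<lambda>x h. L h"]) (use assms in \<open>auto simp: Ck_const bounded_linear_imp_has_derivative\<close>)
qed

lemma Ck_bilinear:
  fixes f :: "'a::euclidean_space \<Rightarrow> 'b::real_normed_vector" and g :: "'a \<Rightarrow> 'c::real_normed_vector"
  assumes "bounded_bilinear P" "open U"
  shows "Ck_on k U f \<Longrightarrow> Ck_on k U g \<Longrightarrow> Ck_on k U (\<lambda>x. P (f x) (g x))"
proof (induction k arbitrary: f g)
  case 0 then show ?case using bounded_bilinear.continuous_on[OF assms(1)] by simp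
next
  case (Suc k)
  have df: "\<And>x. x \<in> U \<Longrightarrow> (f has_derivative frechet_derivative f (at x)) (at x)"
    using Ck_Suc_dest[OF Suc.prems(1) assms(2)] .
  have dg: "\<And>x. x \<in> U \<Longrightarrow> (g has_derivative frechet_derivative g (at x)) (at x)"
    using Ck_Suc_dest[OF Suc.prems(2) assms(2)] .
  show ?case
  proof (rule Ck_Suc_intro[where D="\<lambda>x h. P (f x) (frechet_derivative g (at x) h) + P (frechet_derivative f (at x) h) (g x)"])
    show "open U" by fact
    fix x assume "x \<in> U"
    then show "((\<lambda>x. P (f x) (g x)) has_derivative (\<lambda>h. P (f x) (frechet_derivative g (at x) h) + P (frechet_derivative f (at x) h) (g x))) (at x)"
      using bounded_bilinear.FDERIV[OF assms(1) df dg] by blast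
  next
    fix i :: 'a assume i: "i \<in> Basis"
    show "Ck_on k U (\<lambda>x. P (f x) (frechet_derivative g (at x) i) + P (frechet_derivative f (at x) i) (g x))"
      by (rule Ck_add[OF assms(2) Suc.IH[OF Ck_mono[OF Suc.prems(1)] Ck_Suc_partial[OF Suc.prems(2) i]]
               Suc.IH[OF Ck_Suc_partial[OF Suc.prems(1) i] Ck_mono[OF Suc.prems(2)]]])
  qed
qed

lemma Ck_sum:
  assumes "open U" "finite S" "\<And>j. j \<in> S \<Longrightarrow> Ck_on k U (f j)"
  shows "Ck_on k U (\<lambda>x. \<Sum>j\<in>S. f j x)"
  using assms(2,3)
proof (induction S rule: finite_induct)
  case empty then show ?case by (simp add: Ck_const assms(1))
next
  case (insert a S) then show ?case by (simp add: Ck_add assms(1))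
qed

lemma Ck_compose:
  assumes "open U" "open V" "g ` U \<subseteq> V"
  shows "Ck_on k V f \<Longrightarrow> Ck_on k U g \<Longrightarrow> Ck_on k U (\<lambda>x. f (g x))"
proof (induction k arbitrary: f)
  case 0
  have "continuous_on U (\<lambda>x. f (g x))"
    by (rule continuous_on_compose2[of V f U g]) (use 0 assms(3) in simp_all)
  then show ?case by simp
next
  case (Suc k)
  have dg: "\<And>x. x \<in> U \<Longrightarrow> (g has_derivative frechet_derivative g (at x)) (at x)"
    using Ck_Suc_dest[OF Suc.prems(2) assms(1)] by blast
  have df: "\<And>x. x \<in> U \<Longrightarrow> (f has_derivative frechet_derivative f (at (g x))) (at (g x))"
    using Ck_Suc_dest[OF Suc.prems(1) assms(2)] assms(3) by blast
  have lin: "\<And>x. x \<in> U \<Longrightarrow> linear (frechet_derivative f (at (g x)))"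
    using df has_derivative_linear by blast
  show ?case
  proof (rule Ck_Suc_intro[where D="\<lambda>x h. \<Sum>j\<in>Basis. (frechet_derivative g (at x) h \<bullet> j) *\<^sub>R frechet_derivative f (at (g x)) j"])
    show "open U" by fact
  next
    fix x assume x: "x \<in> U"
    have "((\<lambda>x. f (g x)) has_derivative frechet_derivative f (at (g x)) \<circ> frechet_derivative g (at x)) (at x)"
      using diff_chain_at[OF dg[OF x] df[OF x]] by (simp add: o_def)
    moreover have "frechet_derivative f (at (g x)) \<circ> frechet_derivative g (at x) =
       (\<lambda>h. \<Sum>j\<in>Basis. (frechet_derivative g (at x) h \<bullet> j) *\<^sub>R frechet_derivative f (at (g x)) j)"
    proof
      fix h
      have "frechet_derivative f (at (g x)) (frechet_derivative g (at x) h) =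
         frechet_derivative f (at (g x)) (\<Sum>j\<in>Basis. (frechet_derivative g (at x) h \<bullet> j) *\<^sub>R j)"
        by (simp add: euclidean_representation)
      also have "\<dots> = (\<Sum>j\<in>Basis. (frechet_derivative g (at x) h \<bullet> j) *\<^sub>R frechet_derivative f (at (g x)) j)"
        using lin[OF x] by (simp add: linear_sum linear_scale)
      finally show "(frechet_derivative f (at (g x)) \<circ> frechet_derivative g (at x)) h = \<dots>" by simp
    qed
    ultimately show "((\<lambda>x. f (g x)) has_derivative (\<lambda>h. \<Sum>j\<in>Basis. (frechet_derivative g (at x) h \<bullet> j) *\<^sub>R frechet_derivative f (at (g x)) j)) (at x)"
      by simp
  next
    fix i :: 'a assume i: "i \<in> Basis"
    show "Ck_on k U (\<lambda>x. \<Sum>j\<in>Basis. (frechet_derivative g (at x) i \<bullet> j) *\<^sub>R frechet_derivative f (at (g x)) j)"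
    proof (rule Ck_sum[OF assms(1)])
      fix j :: 'b assume j: "j \<in> Basis"
      have a: "Ck_on k U (\<lambda>x. frechet_derivative g (at x) i \<bullet> j)"
        using Ck_bilinear[OF bounded_bilinear_inner assms(1) Ck_Suc_partial[OF Suc.prems(2) i] Ck_const[OF assms(1), of k j]]
        by simp
      have b: "Ck_on k U (\<lambda>x. frechet_derivative f (at (g x)) j)"
        by (rule Suc.IH[of "\<lambda>y. frechet_derivative f (at y) j"]) (use Ck_Suc_partial[OF Suc.prems(1) j] Ck_mono[OF Suc.prems(2)] in auto)
      show "Ck_on k U (\<lambda>x. (frechet_derivative g (at x) i \<bullet> j) *\<^sub>R frechet_derivative f (at (g x)) j)"
        by (rule Ck_bilinear[OF bounded_bilinear_scaleR assms(1) a b])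
    qed simp
  qed
qed

lemma Ck_restrict:
  assumes "open V" "V \<subseteq> U" "open U"
  shows "Ck_on k U f \<Longrightarrow> Ck_on k V f"
proof (induction k arbitrary: f)
  case 0 then show ?case using assms continuous_on_subset by (metis Ck_on.simps(1))
next
  case (Suc k)
  have "f differentiable_on V" using Suc.prems assms(2) differentiable_on_subset by (metis Ck_on.simps(2))
  moreover have "\<forall>i\<in>Basis. Ck_on k V (\<lambda>x. frechet_derivative f (at x) i)"
    using Suc.prems Suc.IH by (metis Ck_on.simps(2))
  ultimately show ?case by simp
qed

lemma exhaust_5:
  fixes x :: 5
  shows "x = 1 \<or> x = 2 \<or> x = 3 \<or> x = 4 \<or> x = 5"
proof (induct x)
  case (of_int z)
  then have "z = 0 \<or> z = 1 \<or> z = 2 \<or> z = 3 \<or> z = 4" by fastforce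
  then show ?case by auto
qed

lemma forall_5: "(\<forall>i::5. P i) \<longleftrightarrow> P 1 \<and> P 2 \<and> P 3 \<and> P 4 \<and> P 5"
  by (metis exhaust_5)

lemma UNIV_5: "UNIV = {1, 2, 3, 4, 5::5}"
  using exhaust_5 by auto

lemma sum_5: "sum f (UNIV::5 set) = f 1 + f 2 + f 3 + f 4 + f 5"
  unfolding UNIV_5 by (simp add: ac_simps)

lemma vector_5 [simp]:
 "(vector [a,b,c,d,e] ::('a::zero)^5)$1 = a"
 "(vector [a,b,c,d,e] ::('a::zero)^5)$2 = b"
 "(vector [a,b,c,d,e] ::('a::zero)^5)$3 = c"
 "(vector [a,b,c,d,e] ::('a::zero)^5)$4 = d"
 "(vector [a,b,c,d,e] ::('a::zero)^5)$5 = e"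
  unfolding vector_def by simp_all

lemma vec5_eq: "(x::'a^5) = y \<longleftrightarrow> x$1 = y$1 \<and> x$2 = y$2 \<and> x$3 = y$3 \<and> x$4 = y$4 \<and> x$5 = y$5"
  by (simp add: vec_eq_iff forall_5)
lemma vec3_eq: "(x::'a^3) = y \<longleftrightarrow> x$1 = y$1 \<and> x$2 = y$2 \<and> x$3 = y$3"
  by (simp add: vec_eq_iff forall_3)
lemma vec2_eq: "(x::'a^2) = y \<longleftrightarrow> x$1 = y$1 \<and> x$2 = y$2"
  by (simp add: vec_eq_iff forall_2)

definition emb3 :: "real^3 \<Rightarrow> real^5" where "emb3 u = vector [u$1, u$2, u$3, 0, 0]"
definition emb2 :: "real^2 \<Rightarrow> real^5" where "emb2 v = vector [0, 0, 0, v$1, v$2]"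
definition first3 :: "real^5 \<Rightarrow> real^3" where "first3 z = vector [z$1, z$2, z$3]"
definition last2 :: "real^5 \<Rightarrow> real^2" where "last2 z = vector [z$4, z$5]"

lemma emb3_nth [simp]: "emb3 u $ 1 = u$1" "emb3 u $ 2 = u$2" "emb3 u $ 3 = u$3" "emb3 u $ 4 = 0" "emb3 u $ 5 = 0"
  by (simp_all add: emb3_def)
lemma emb2_nth [simp]: "emb2 u $ 1 = 0" "emb2 u $ 2 = 0" "emb2 u $ 3 = 0" "emb2 u $ 4 = u$1" "emb2 u $ 5 = u$2"
  by (simp_all add: emb2_def)
lemma first3_nth [simp]: "first3 z $ 1 = z$1" "first3 z $ 2 = z$2" "first3 z $ 3 = z$3"
  by (simp_all add: first3_def)
lemma last2_nth [simp]: "last2 z $ 1 = z$4" "last2 z $ 2 = z$5"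
  by (simp_all add: last2_def)

lemma inner5: "(x::real^5) \<bullet> y = x$1*y$1 + x$2*y$2 + x$3*y$3 + x$4*y$4 + x$5*y$5"
  by (simp add: inner_vec_def sum_5)
lemma inner3: "(x::real^3) \<bullet> y = x$1*y$1 + x$2*y$2 + x$3*y$3"
  by (simp add: inner_vec_def sum_3)
lemma inner2: "(x::real^2) \<bullet> y = x$1*y$1 + x$2*y$2"
  by (simp add: inner_vec_def sum_2)

lemma emb_inner [simp]:
  "emb3 u \<bullet> emb3 u' = u \<bullet> u'" "emb2 v \<bullet> emb2 v' = v \<bullet> v'" "emb3 u \<bullet> emb2 v = 0" "emb2 v \<bullet> emb3 u = 0"
  by (simp_all add: inner5 inner3 inner2)

lemma emb_lin [simp]:
  "emb3 (u + u') = emb3 u + emb3 u'" "emb3 (r *\<^sub>R u) = r *\<^sub>R emb3 u" "emb3 (- u) = - emb3 u"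
  "emb3 (u - u') = emb3 u - emb3 u'" "emb3 0 = 0"
  "emb2 (v + v') = emb2 v + emb2 v'" "emb2 (r *\<^sub>R v) = r *\<^sub>R emb2 v" "emb2 (- v) = - emb2 v"
  "emb2 (v - v') = emb2 v - emb2 v'" "emb2 0 = 0"
  by (simp_all add: vec5_eq)

lemma first3_lin [simp]:
  "first3 (z + z') = first3 z + first3 z'" "first3 (r *\<^sub>R z) = r *\<^sub>R first3 z" "first3 (- z) = - first3 z"
  "first3 (z - z') = first3 z - first3 z'" "first3 0 = 0"
  "first3 (emb3 u) = u" "first3 (emb2 v) = 0"
  "last2 (z + z') = last2 z + last2 z'" "last2 (r *\<^sub>R z) = r *\<^sub>R last2 z" "last2 (- z) = - last2 z"
  "last2 (z - z') = last2 z - last2 z'" "last2 0 = 0"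
  "last2 (emb3 u) = 0" "last2 (emb2 v) = v"
  by (simp_all add: vec3_eq vec2_eq)

lemma wedge_nth [simp]: "wedge u v $ i $ j = u$i * v$j - v$i * u$j"
  by (simp add: wedge_def)

lemma wedge_mv: "wedge u v *v w = (v \<bullet> w) *\<^sub>R u - (u \<bullet> w) *\<^sub>R v"
  by (simp add: vec_eq_iff matrix_vector_mult_def inner_vec_def algebra_simps sum_subtractf sum_distrib_left sum_distrib_right)

lemma wedge_lin [simp]:
  "wedge (u + u') v = wedge u v + wedge u' v" "wedge u (v + v') = wedge u v + wedge u v'"
  "wedge (r *\<^sub>R u) v = r *\<^sub>R wedge u v" "wedge u (r *\<^sub>R v) = r *\<^sub>R wedge u v"
  "wedge (- u) v = - wedge u v" "wedge u (- v) = - wedge u v"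
  "wedge (u - u') v = wedge u v - wedge u' v" "wedge u (v - v') = wedge u v - wedge u v'"
  by (simp_all add: vec_eq_iff algebra_simps)

lemma wedge_swap: "wedge v u = - wedge u v"
  by (simp add: vec_eq_iff)

lemma conj_wedge: "M ** wedge u v ** transpose M = wedge (M *v u) (M *v v)"
  apply (simp add: vec_eq_iff matrix_matrix_mult_def matrix_vector_mult_def transpose_def
        algebra_simps sum_subtractf sum_distrib_left sum_distrib_right)
  apply (intro allI)
  apply (subst sum.swap)
  apply (simp add: mult_ac)
  done

lemma conj_lin:
  "M ** (X + Y) ** transpose M = M ** X ** transpose M + M ** Y ** transpose M"
  "M ** (X - Y) ** transpose M = M ** X ** transpose M - M ** Y ** transpose M"
  "M ** (r *\<^sub>R X) ** transpose M = r *\<^sub>R (M ** X ** transpose M)"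
  "M ** (0::real^'n^'n) ** transpose M = 0"
  by (simp_all add: vec_eq_iff matrix_matrix_mult_def algebra_simps sum.distrib sum_subtractf
       sum_distrib_left sum_distrib_right)

lemma bd_mv: "blockdiag A B *v z = emb3 (A *v first3 z) + emb2 (B *v last2 z)"
  by (simp add: vec5_eq blockdiag_def matrix_vector_mult_def sum_5 sum_3 sum_2)

lemma mv3: "A *v vector [p, q, r] = p *\<^sub>R (A *v axis 1 1) + q *\<^sub>R (A *v axis 2 1) + r *\<^sub>R (A *v axis 3 1)"
  for A :: "real^3^3"
  by (simp add: vec3_eq matrix_vector_mult_def sum_3 axis_def)

lemma mv2: "B *v vector [p, q] = p *\<^sub>R (B *v axis 1 1) + q *\<^sub>R (B *v axis 2 1)"
  for B :: "real^2^2"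
  by (simp add: vec2_eq matrix_vector_mult_def sum_2 axis_def)

definition K :: "real^3 \<Rightarrow> real^5^5" where
  "K u = u$1 *\<^sub>R wedge (axis 2 1) (axis 3 1) + u$2 *\<^sub>R wedge (axis 3 1) (axis 1 1) + u$3 *\<^sub>R wedge (axis 1 1) (axis 2 1)"

lemma wedge_emb3: "wedge (emb3 a) (emb3 b) = K (cross3 a b)"
  by (simp add: vec5_eq K_def cross3_def axis_def algebra_simps)

lemma fr_x0:
  "fr1 (vector [c, 0, 0, s, 0]) = vector [0, c, -s, 0, 0]"
  "fr2 (vector [c, 0, 0, s, 0]) = vector [0, s, c, 0, 0]"
  "fr3 (vector [c, 0, 0, s, 0]) = vector [-s, 0, 0, c, 0]"
  "fr4 (vector [c, 0, 0, s, 0]) = vector [0, 0, 0, 0, 1]"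
  by (simp_all add: fr1_def fr2_def fr3_def fr4_def vec5_eq)

lemma first3_vec [simp]: "first3 (vector [a, b, c, d, e]) = vector [a, b, c]"
  by (simp add: vec3_eq)
lemma last2_vec [simp]: "last2 (vector [a, b, c, d, e]) = vector [d, e]"
  by (simp add: vec2_eq)

definition Wform :: "real \<Rightarrow> real \<Rightarrow> real \<Rightarrow> real^5 \<Rightarrow> real^5 \<Rightarrow> real^5 \<Rightarrow> real^5 \<Rightarrow> real^5^5" where
  "Wform a1 a2 a3 F1 F2 F3 F4 = a1 *\<^sub>R (wedge F1 F2 - wedge F3 F4) + a2 *\<^sub>R (wedge F1 F3 - wedge F4 F2)
     + a3 *\<^sub>R (wedge F1 F4 - wedge F2 F3)"

lemma orbit_formula:
  "act (blockdiag A B) (fpt (vector [c, 0, 0, s, 0]) a1 a2 a3) =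
    (c *\<^sub>R emb3 (A *v axis 1 1) + s *\<^sub>R emb2 (B *v axis 1 1),
     Wform a1 a2 a3 (emb3 (c *\<^sub>R (A *v axis 2 1) - s *\<^sub>R (A *v axis 3 1)))
       (emb3 (s *\<^sub>R (A *v axis 2 1) + c *\<^sub>R (A *v axis 3 1)))
       (emb2 (c *\<^sub>R (B *v axis 1 1)) - emb3 (s *\<^sub>R (A *v axis 1 1)))
       (emb2 (B *v axis 2 1)))"
  by (simp add: act_def fpt_def om1_def om2_def om3_def Wform_def conj_lin conj_wedge bd_mv fr_x0 mv3 mv2
      algebra_simps)

lemma mv_lin [simp]:
  "(X + Y) *v v = X *v v + Y *v v" "(X - Y) *v v = X *v v - Y *v v" "(r *\<^sub>R X) *v v = r *\<^sub>R (X *v v)"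
  "(- X) *v v = - (X *v v)"
  for X Y :: "real^'n^'m"
  by (simp_all add: vec_eq_iff matrix_vector_mult_def algebra_simps sum.distrib sum_subtractf
     sum_distrib_left sum_negf)

definition rot90 :: "real^2 \<Rightarrow> real^2" where "rot90 v = vector [- v$2, v$1]"
definition rot2 :: "real^2 \<Rightarrow> real^2^2" where "rot2 v = vector [vector [v$1, - v$2], vector [v$2, v$1]]"
definition mk3 :: "real^3 \<Rightarrow> real^3 \<Rightarrow> real^3 \<Rightarrow> real^3^3" where
  "mk3 u v w = vector [vector [u$1, v$1, w$1], vector [u$2, v$2, w$2], vector [u$3, v$3, w$3]]"

lemma rot90_nth [simp]: "rot90 v $ 1 = - v$2" "rot90 v $ 2 = v$1" by (simp_all add: rot90_def)
lemma rot2_nth [simp]: "rot2 v $ 1 $ 1 = v$1" "rot2 v $ 1 $ 2 = - v$2" "rot2 v $ 2 $ 1 = v$2" "rot2 v $ 2 $ 2 = v$1"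
  by (simp_all add: rot2_def)
lemma mk3_nth [simp]:
  "mk3 u v w $ i $ 1 = u $ i" "mk3 u v w $ i $ 2 = v $ i" "mk3 u v w $ i $ 3 = w $ i"
  using exhaust_3[of i] by (auto simp: mk3_def)

lemma rot2_cols [simp]: "rot2 v *v axis 1 1 = v" "rot2 v *v axis 2 1 = rot90 v"
  by (simp_all add: vec2_eq matrix_vector_mult_def sum_2 axis_def)

lemma mk3_cols [simp]: "mk3 u v w *v axis 1 1 = u" "mk3 u v w *v axis 2 1 = v" "mk3 u v w *v axis 3 1 = w"
  by (simp_all add: vec3_eq matrix_vector_mult_def sum_3 axis_def)

lemma mk3_eq: "mk3 (A *v axis 1 1) (A *v axis 2 1) (A *v axis 3 1) = A"
  unfolding vec_eq_iff forall_3 by (simp add: matrix_vector_mult_def sum_3 axis_def)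

lemma orth_cols:
  assumes "orthogonal_matrix (A :: real^'n^'n)"
  shows "(A *v x) \<bullet> (A *v y) = x \<bullet> y"
proof -
  have "orthogonal_transformation ((*v) A)"
    using assms by (simp add: orthogonal_transformation_matrix)
  then show ?thesis by (simp add: orthogonal_transformation_def)
qed

lemma SO3_facts:
  fixes A :: "real^3^3"
  assumes "A \<in> SO"
  shows "(A *v axis 1 1) \<bullet> (A *v axis 1 1) = 1" "(A *v axis 2 1) \<bullet> (A *v axis 2 1) = 1"
    "(A *v axis 3 1) \<bullet> (A *v axis 3 1) = 1"
    "(A *v axis 1 1) \<bullet> (A *v axis 2 1) = 0" "(A *v axis 2 1) \<bullet> (A *v axis 3 1) = 0"
    "(A *v axis 1 1) \<bullet> (A *v axis 3 1) = 0"
    "(A *v axis 2 1) \<bullet> (A *v axis 1 1) = 0" "(A *v axis 3 1) \<bullet> (A *v axis 2 1) = 0"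
    "(A *v axis 3 1) \<bullet> (A *v axis 1 1) = 0"
    "cross3 (A *v axis 1 1) (A *v axis 2 1) = A *v axis 3 1"
    "cross3 (A *v axis 2 1) (A *v axis 3 1) = A *v axis 1 1"
    "cross3 (A *v axis 3 1) (A *v axis 1 1) = A *v axis 2 1"
proof -
  have r: "rotation_matrix A" using assms by (simp add: SO_def)
  then have o: "orthogonal_matrix A" by (simp add: rotation_matrix_def)
  show "(A *v axis 1 1) \<bullet> (A *v axis 1 1) = 1" "(A *v axis 2 1) \<bullet> (A *v axis 2 1) = 1"
    "(A *v axis 3 1) \<bullet> (A *v axis 3 1) = 1"
    "(A *v axis 1 1) \<bullet> (A *v axis 2 1) = 0" "(A *v axis 2 1) \<bullet> (A *v axis 3 1) = 0"
    "(A *v axis 1 1) \<bullet> (A *v axis 3 1) = 0"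
    "(A *v axis 2 1) \<bullet> (A *v axis 1 1) = 0" "(A *v axis 3 1) \<bullet> (A *v axis 2 1) = 0"
    "(A *v axis 3 1) \<bullet> (A *v axis 1 1) = 0"
    by (simp_all add: orth_cols[OF o] inner_axis_axis)
  show "cross3 (A *v axis 1 1) (A *v axis 2 1) = A *v axis 3 1"
    "cross3 (A *v axis 2 1) (A *v axis 3 1) = A *v axis 1 1"
    "cross3 (A *v axis 3 1) (A *v axis 1 1) = A *v axis 2 1"
    by (simp_all add: cross_rotation_matrix[OF r] cross_basis)
qed

lemma SO2_rot2:
  fixes B :: "real^2^2"
  assumes "B \<in> SO"
  shows "B = rot2 (B *v axis 1 1)" "norm (B *v axis 1 1) = 1"
proof -
  have r: "orthogonal_matrix B" "det B = 1" using assms by (simp_all add: SO_def rotation_matrix_def)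
  define p q r' t where "p = B$1$1" "q = B$1$2" "r' = B$2$1" "t = B$2$2"
  have e1: "p*p + r'*r' = 1" "p*q + r'*t = 0" "q*q + t*t = 1"
    using r(1) unfolding orthogonal_matrix_def
    by (simp_all add: vec_eq_iff forall_2 matrix_matrix_mult_def transpose_def sum_2 mat_def p_q_r'_t_def)
  have e2: "p*t - q*r' = 1" using r(2) by (simp add: det_2 p_q_r'_t_def)
  have "(q + r')^2 + (t - p)^2 = 0"
    using e1 e2 by (simp add: power2_eq_square algebra_simps)
  then have "q = - r'" "t = p" by (simp_all add: sum_power2_eq_zero_iff)
  then show "B = rot2 (B *v axis 1 1)"
    by (simp add: vec_eq_iff forall_2 matrix_vector_mult_def sum_2 axis_def p_q_r'_t_def)
  show "norm (B *v axis 1 1) = 1"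
    using e1 by (simp add: norm_eq_sqrt_inner inner2 matrix_vector_mult_def sum_2 axis_def p_q_r'_t_def)
qed

lemma rot2_SO:
  assumes "norm v = 1"
  shows "rot2 v \<in> SO"
proof -
  have n: "v$1 * v$1 + v$2 * v$2 = 1"
    using assms by (simp add: norm_eq_sqrt_inner inner2)
  show ?thesis
    unfolding SO_def rotation_matrix_def orthogonal_matrix_def
    using n by (simp add: vec_eq_iff forall_2 matrix_matrix_mult_def transpose_def sum_2 mat_def det_2 algebra_simps)
qed

definition sm :: "('a::euclidean_space \<Rightarrow> 'b::real_normed_vector) \<Rightarrow> bool" where
  "sm f \<longleftrightarrow> (\<forall>k. Ck_on k UNIV f)"

lemma sm_const [intro!]: "sm (\<lambda>x. c)"
  by (simp add: sm_def Ck_const)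

lemma sm_compose: "sm f \<Longrightarrow> sm g \<Longrightarrow> sm (\<lambda>x. f (g x))"
  unfolding sm_def using Ck_compose[of UNIV UNIV g] by auto

lemma sm_id [intro!]: "sm (\<lambda>x. x)"
  unfolding sm_def using Ck_linear[OF open_UNIV bounded_linear_ident] by auto

lemma sm_lin:
  fixes L :: "'b::euclidean_space \<Rightarrow> 'c::real_normed_vector"
  shows "bounded_linear L \<Longrightarrow> sm f \<Longrightarrow> sm (\<lambda>x. L (f x))"
  using sm_compose[of L f] Ck_linear[OF open_UNIV] by (auto simp: sm_def)

lemma sm_bil: "bounded_bilinear P \<Longrightarrow> sm f \<Longrightarrow> sm g \<Longrightarrow> sm (\<lambda>x. P (f x) (g x))"
  unfolding sm_def using Ck_bilinear[OF _ open_UNIV] by blast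

lemma sm_add [intro!]: "sm f \<Longrightarrow> sm g \<Longrightarrow> sm (\<lambda>x. f x + g x)"
  unfolding sm_def using Ck_add[OF open_UNIV] by blast

lemma sm_minus [intro!]: fixes f :: "'a::euclidean_space \<Rightarrow> 'b::euclidean_space" shows "sm f \<Longrightarrow> sm (\<lambda>x. - f x)"
  by (rule sm_lin[OF bounded_linear_minus[OF bounded_linear_ident]])

lemma sm_diff [intro!]: fixes f g :: "'a::euclidean_space \<Rightarrow> 'b::euclidean_space" shows "sm f \<Longrightarrow> sm g \<Longrightarrow> sm (\<lambda>x. f x - g x)"
  using sm_add[of f "\<lambda>x. - g x"] sm_minus[of g] by simp

lemma sm_scaleR [intro!]: "sm f \<Longrightarrow> sm g \<Longrightarrow> sm (\<lambda>x. f x *\<^sub>R g x)"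
  by (rule sm_bil[OF bounded_bilinear_scaleR])

lemma sm_mult [intro!]: "sm f \<Longrightarrow> sm g \<Longrightarrow> sm (\<lambda>x. (f x :: real) * g x)"
  by (rule sm_bil[OF bounded_bilinear_mult])

lemma sm_divide [intro!]: "sm f \<Longrightarrow> sm (\<lambda>x. (f x :: real) / c)"
  using sm_mult[of f "\<lambda>x. inverse c"] by (simp add: divide_inverse sm_const)

lemma sm_inner [intro!]: "sm f \<Longrightarrow> sm g \<Longrightarrow> sm (\<lambda>x. f x \<bullet> g x)"
  by (rule sm_bil[OF bounded_bilinear_inner])

lemma sm_fst [intro!]: fixes f :: "'a::euclidean_space \<Rightarrow> 'b::euclidean_space \<times> 'c::euclidean_space" shows "sm f \<Longrightarrow> sm (\<lambda>x. fst (f x))"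
  by (rule sm_lin[OF bounded_linear_fst])
lemma sm_snd [intro!]: fixes f :: "'a::euclidean_space \<Rightarrow> 'b::euclidean_space \<times> 'c::euclidean_space" shows "sm f \<Longrightarrow> sm (\<lambda>x. snd (f x))"
  by (rule sm_lin[OF bounded_linear_snd])

lemma sm_pair [intro!]:
  fixes f :: "'a::euclidean_space \<Rightarrow> 'b::euclidean_space" and g :: "'a \<Rightarrow> 'c::euclidean_space"
  shows "sm f \<Longrightarrow> sm g \<Longrightarrow> sm (\<lambda>x. (f x, g x))"
proof -
  assume a: "sm f" "sm g"
  have l1: "bounded_linear (\<lambda>a::'b. (a, 0::'c))"
    using bounded_linear_Pair[OF bounded_linear_ident bounded_linear_zero] by simp
  have l2: "bounded_linear (\<lambda>a::'c. (0::'b, a))"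
    using bounded_linear_Pair[OF bounded_linear_zero bounded_linear_ident] by simp
  have "sm (\<lambda>x. (f x, 0) + (0, g x))"
    by (rule sm_add[OF sm_lin[OF l1 a(1)] sm_lin[OF l2 a(2)]])
  then show ?thesis by simp
qed

lemma sm_nth [intro!]: fixes f :: "'a::euclidean_space \<Rightarrow> 'b::euclidean_space ^'n" shows "sm f \<Longrightarrow> sm (\<lambda>x. f x $ i)"
  by (rule sm_lin[OF bounded_linear_vec_nth])

lemma bilinear_mv: "bilinear ((*v) :: real^'n^'m \<Rightarrow> real^'n \<Rightarrow> real^'m)"
  unfolding bilinear_def
  by (auto intro!: linearI simp: vec_eq_iff matrix_vector_mult_def algebra_simps sum.distrib sum_distrib_left)

lemma bilinear_mm: "bilinear ((**) :: real^'n^'m \<Rightarrow> real^'p^'n \<Rightarrow> real^'p^'m)"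
  unfolding bilinear_def
  by (auto intro!: linearI simp: vec_eq_iff matrix_matrix_mult_def algebra_simps sum.distrib sum_distrib_left)

lemma bilinear_wedge: "bilinear wedge"
  unfolding bilinear_def by (auto intro!: linearI)

lemma sm_mv [intro!]: "sm f \<Longrightarrow> sm g \<Longrightarrow> sm (\<lambda>x. (f x :: real^'n^'m) *v g x)"
  by (rule sm_bil[OF bilinear_mv[unfolded bilinear_conv_bounded_bilinear]])
lemma sm_mm [intro!]: "sm f \<Longrightarrow> sm g \<Longrightarrow> sm (\<lambda>x. (f x :: real^'n^'m) ** (g x :: real^'p^'n))"
  by (rule sm_bil[OF bilinear_mm[unfolded bilinear_conv_bounded_bilinear]])
lemma sm_cross [intro!]: "sm f \<Longrightarrow> sm g \<Longrightarrow> sm (\<lambda>x. cross3 (f x) (g x))"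
  by (rule sm_bil[OF bilinear_cross[unfolded bilinear_conv_bounded_bilinear]])
lemma sm_wedge [intro!]: "sm f \<Longrightarrow> sm g \<Longrightarrow> sm (\<lambda>x. wedge (f x) (g x))"
  by (rule sm_bil[OF bilinear_wedge[unfolded bilinear_conv_bounded_bilinear]])

lemma lin_bl: "linear L \<Longrightarrow> bounded_linear (L :: 'a::euclidean_space \<Rightarrow> 'b::real_normed_vector)"
  by (simp add: linear_conv_bounded_linear)

lemma sm_emb3 [intro!]: "sm f \<Longrightarrow> sm (\<lambda>x. emb3 (f x))"
  by (rule sm_lin[OF lin_bl]) (auto intro!: linearI)
lemma sm_emb2 [intro!]: "sm f \<Longrightarrow> sm (\<lambda>x. emb2 (f x))"
  by (rule sm_lin[OF lin_bl]) (auto intro!: linearI)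
lemma sm_first3 [intro!]: "sm f \<Longrightarrow> sm (\<lambda>x. first3 (f x))"
  by (rule sm_lin[OF lin_bl]) (auto intro!: linearI)
lemma sm_last2 [intro!]: "sm f \<Longrightarrow> sm (\<lambda>x. last2 (f x))"
  by (rule sm_lin[OF lin_bl]) (auto intro!: linearI)
lemma sm_rot90 [intro!]: "sm f \<Longrightarrow> sm (\<lambda>x. rot90 (f x))"
  by (rule sm_lin[OF lin_bl]) (auto intro!: linearI simp: vec2_eq)
lemma sm_rot2 [intro!]: "sm f \<Longrightarrow> sm (\<lambda>x. rot2 (f x))"
  by (rule sm_lin[OF lin_bl]) (auto intro!: linearI simp: vec_eq_iff forall_2)
lemma sm_K [intro!]: "sm f \<Longrightarrow> sm (\<lambda>x. K (f x))"
  by (rule sm_lin[OF lin_bl]) (auto intro!: linearI simp: K_def algebra_simps)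
lemma sm_transpose [intro!]: "sm f \<Longrightarrow> sm (\<lambda>x. transpose (f x :: real^'n^'m))"
  by (rule sm_lin[OF lin_bl]) (auto intro!: linearI simp: vec_eq_iff transpose_def)

lemma sm_mk3 [intro!]: "sm f \<Longrightarrow> sm g \<Longrightarrow> sm h \<Longrightarrow> sm (\<lambda>x. mk3 (f x) (g x) (h x))"
proof -
  assume a: "sm f" "sm g" "sm h"
  have l: "bounded_linear (\<lambda>p::(real^3) \<times> (real^3) \<times> (real^3). mk3 (fst p) (fst (snd p)) (snd (snd p)))"
    by (rule lin_bl) (auto intro!: linearI simp: vec_eq_iff forall_3)
  show ?thesis
    using sm_lin[OF l sm_pair[OF a(1) sm_pair[OF a(2) a(3)]]] by simp
qed

lemma sm_blockdiag [intro!]: "sm f \<Longrightarrow> sm g \<Longrightarrow> sm (\<lambda>x. blockdiag (f x) (g x))"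
proof -
  assume a: "sm f" "sm g"
  have l: "bounded_linear (\<lambda>p::(real^3^3) \<times> (real^2^2). blockdiag (fst p) (snd p))"
    by (rule lin_bl) (auto intro!: linearI simp: vec_eq_iff forall_5 blockdiag_def)
  show ?thesis
    using sm_lin[OF l sm_pair[OF a(1) a(2)]] by simp
qed

lemma sm_Wform [intro!]: "sm F1 \<Longrightarrow> sm F2 \<Longrightarrow> sm F3 \<Longrightarrow> sm F4 \<Longrightarrow>
   sm (\<lambda>x. Wform a1 a2 a3 (F1 x) (F2 x) (F3 x) (F4 x))"
  unfolding Wform_def by (intro sm_add sm_diff sm_scaleR sm_const sm_wedge)

lemma sm_smooth_map: "sm F \<Longrightarrow> (\<And>x. x \<in> S \<Longrightarrow> F x = f x) \<Longrightarrow> smooth_map S f"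
  unfolding smooth_map_def sm_def by (metis IntD1 open_UNIV UNIV_I)

lemma sm_continuous: "sm f \<Longrightarrow> continuous_on UNIV f"
  unfolding sm_def using Ck_on.simps(1) by blast

definition orbF :: "real \<Rightarrow> real \<Rightarrow> real \<Rightarrow> real \<Rightarrow> real \<Rightarrow> real^3^3 \<Rightarrow> real^2 \<Rightarrow> (real^5) \<times> (real^5^5)" where
  "orbF c s a1 a2 a3 A b = (c *\<^sub>R emb3 (A *v axis 1 1) + s *\<^sub>R emb2 b,
     Wform a1 a2 a3 (emb3 (c *\<^sub>R (A *v axis 2 1) - s *\<^sub>R (A *v axis 3 1)))
       (emb3 (s *\<^sub>R (A *v axis 2 1) + c *\<^sub>R (A *v axis 3 1)))
       (emb2 (c *\<^sub>R b) - emb3 (s *\<^sub>R (A *v axis 1 1)))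
       (emb2 (rot90 b)))"

lemma orbit_orbF:
  assumes "B \<in> SO"
  shows "act (blockdiag A B) (fpt (vector [c, 0, 0, s, 0]) a1 a2 a3) = orbF c s a1 a2 a3 A (B *v axis 1 1)"
proof -
  have "B *v axis 2 1 = rot90 (B *v axis 1 1)"
    using SO2_rot2(1)[OF assms] rot2_cols(2) by metis
  then show ?thesis by (simp add: orbit_formula orbF_def)
qed

lemma SO_id: "mat 1 \<in> SO"
  by (simp add: SO_def rotation_matrix_def orthogonal_matrix_id)

lemma orb_char:
  "orbit32 (fpt (vector [c, 0, 0, s, 0]) a1 a2 a3) = {orbF c s a1 a2 a3 A b | A b. A \<in> SO \<and> norm b = 1}"
proof (rule set_eqI, rule iffI)
  fix x assume "x \<in> orbit32 (fpt (vector [c, 0, 0, s, 0]) a1 a2 a3)"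
  then obtain A B where AB: "A \<in> SO" "B \<in> SO" "x = act (blockdiag A B) (fpt (vector [c, 0, 0, s, 0]) a1 a2 a3)"
    unfolding orbit32_def by blast
  then show "x \<in> {orbF c s a1 a2 a3 A b | A b. A \<in> SO \<and> norm b = 1}"
    using orbit_orbF[OF AB(2)] SO2_rot2(2)[OF AB(2)] by blast
next
  fix x assume "x \<in> {orbF c s a1 a2 a3 A b | A b. A \<in> SO \<and> norm b = 1}"
  then obtain A b where Ab: "A \<in> SO" "norm b = 1" "x = orbF c s a1 a2 a3 A b" by blast
  have "x = act (blockdiag A (rot2 b)) (fpt (vector [c, 0, 0, s, 0]) a1 a2 a3)"
    using orbit_orbF[OF rot2_SO[OF Ab(2)]] Ab by simp
  then show "x \<in> orbit32 (fpt (vector [c, 0, 0, s, 0]) a1 a2 a3)"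
    unfolding orbit32_def using Ab rot2_SO by blast
qed

lemma diffeo_intro:
  assumes "sm F" "sm G" "\<And>x. x \<in> S \<Longrightarrow> G (F x) = x" "\<And>y. y \<in> T \<Longrightarrow> F (G y) = y"
    "\<And>x. x \<in> S \<Longrightarrow> F x \<in> T" "\<And>y. y \<in> T \<Longrightarrow> G y \<in> S"
  shows "diffeomorphic_sets S T"
  unfolding diffeomorphic_sets_def
proof (intro exI conjI)
  show "F ` S = T"
  proof
    show "F ` S \<subseteq> T" using assms(5) by blast
    show "T \<subseteq> F ` S" using assms(4,6) by (metis image_eqI subsetI)
  qed
  show "G ` T = S"
  proof
    show "G ` T \<subseteq> S" using assms(6) by blast
    show "S \<subseteq> G ` T" using assms(3,5) by (metis image_eqI subsetI)
  qed
  show "\<forall>x\<in>S. G (F x) = x" "\<forall>y\<in>T. F (G y) = y" using assms(3,4) by auto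
  show "smooth_map S F" "smooth_map T G" using sm_smooth_map assms(1,2) by blast+
qed

lemma K_lin [simp]:
  "K (u + v) = K u + K v" "K (r *\<^sub>R u) = r *\<^sub>R K u" "K (- u) = - K u" "K (u - v) = K u - K v" "K 0 = 0"
  by (simp_all add: K_def algebra_simps)

lemma K_emb2: "K u *v emb2 w = 0"
  by (simp add: K_def wedge_mv axis_def inner5)

lemma wedge_E45: "wedge (emb2 b) (emb2 (rot90 b)) = (b \<bullet> b) *\<^sub>R wedge (emb2 (axis 1 1)) (emb2 (axis 2 1))"
  by (simp add: vec_eq_iff forall_5 inner2 axis_def algebra_simps)

lemma rot90_inner [simp]: "rot90 x \<bullet> rot90 y = x \<bullet> y" "x \<bullet> rot90 x = 0" "rot90 x \<bullet> x = 0"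
  by (simp_all add: inner2 algebra_simps)

lemma norm1_inner: "norm (b::'a::real_inner) = 1 \<Longrightarrow> b \<bullet> b = 1"
  by (simp add: dot_square_norm)

lemma in_sphere1: "(x \<in> sphere 0 1) = (norm x = 1)"
  by simp

lemma cross_rot: "cross3 (c *\<^sub>R u - s *\<^sub>R v) (s *\<^sub>R u + c *\<^sub>R v) = (c * c + s * s) *\<^sub>R cross3 u v"
  by (simp add: vec3_eq cross_components algebra_simps)

lemma caseF:
  "diffeomorphic_sets (orbit32 (fpt (vector [0, 0, 0, 1, 0]) 0 0 0)) (sphere (0::real^2) 1)"
proof (rule diffeo_intro[where F="\<lambda>x. last2 (fst x)" and G="\<lambda>v. (emb2 v, 0)"])
  show "sm (\<lambda>x::(real^5) \<times> (real^5^5). last2 (fst x))" by (intro sm_last2 sm_fst sm_id)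
  show "sm (\<lambda>v::real^2. (emb2 v, 0::real^5^5))" by (intro sm_pair sm_emb2 sm_id sm_const)
  fix x assume "x \<in> orbit32 (fpt (vector [0, 0, 0, 1, 0]) 0 0 0)"
  then obtain A b where "A \<in> SO" "norm b = 1" "x = orbF 0 1 0 0 0 A b"
    unfolding orb_char by blast
  then show "(emb2 (last2 (fst x)), 0) = x" "last2 (fst x) \<in> sphere 0 1"
    by (simp_all add: orbF_def Wform_def)
next
  fix y :: "real^2" assume y: "y \<in> sphere 0 1"
  show "last2 (fst (emb2 y, 0::real^5^5)) = y" by simp
  have "(emb2 y, 0) = orbF 0 1 0 0 0 (mat 1) y" by (simp add: orbF_def Wform_def)
  then show "(emb2 y, 0) \<in> orbit32 (fpt (vector [0, 0, 0, 1, 0]) 0 0 0)"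
    unfolding orb_char using y SO_id by auto
qed

lemma SO3_cross:
  fixes A :: "real^3^3"
  assumes "A \<in> SO"
  shows "cross3 (A *v axis 1 1) (A *v axis 2 1) = A *v axis 3 1"
    "cross3 (A *v axis 2 1) (A *v axis 3 1) = A *v axis 1 1"
    "cross3 (A *v axis 3 1) (A *v axis 1 1) = A *v axis 2 1"
    "cross3 (A *v axis 2 1) (A *v axis 1 1) = - (A *v axis 3 1)"
    "cross3 (A *v axis 3 1) (A *v axis 2 1) = - (A *v axis 1 1)"
    "cross3 (A *v axis 1 1) (A *v axis 3 1) = - (A *v axis 2 1)"
  using SO3_facts[OF assms] cross_skew by metis+

lemma SO3_norm: "A \<in> SO \<Longrightarrow> norm (A *v x) = norm (x :: real^3)"
  using orth_cols[of A x x] by (simp add: SO_def rotation_matrix_def norm_eq_sqrt_inner)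

lemma SO3_col_norm: "A \<in> SO \<Longrightarrow> norm (A *v axis i 1) = (1::real)"
  for A :: "real^3^3"
  using SO3_norm[of A "axis i 1"] by simp

lemma exists_SO3_col: "norm (u::real^3) = 1 \<Longrightarrow> \<exists>A\<in>SO. A *v axis 1 1 = u"
  using rotation_matrix_exists_basis[of u 1] by (auto simp: SO_def)

abbreviation E4 :: "real^5" where "E4 \<equiv> emb2 (axis 1 1)"
abbreviation E5 :: "real^5" where "E5 \<equiv> emb2 (axis 2 1)"

lemma caseD_eq:
  assumes "A \<in> SO" "norm b = 1"
  shows "orbF 1 0 a1 0 0 A b = (emb3 (A *v axis 1 1), a1 *\<^sub>R (K (A *v axis 1 1) - wedge E4 E5))"
  using assms by (simp add: orbF_def Wform_def wedge_emb3 SO3_cross wedge_E45 norm1_inner)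

lemma caseD:
  "diffeomorphic_sets (orbit32 (fpt (vector [1, 0, 0, 0, 0]) a1 0 0)) (sphere (0::real^3) 1)"
proof (rule diffeo_intro[where F="\<lambda>x. first3 (fst x)" and G="\<lambda>u. (emb3 u, a1 *\<^sub>R (K u - wedge E4 E5))"])
  show "sm (\<lambda>x::(real^5) \<times> (real^5^5). first3 (fst x))" by (intro sm_first3 sm_fst sm_id)
  show "sm (\<lambda>u. (emb3 u, a1 *\<^sub>R (K u - wedge E4 E5)))"
    by (intro sm_pair sm_emb3 sm_id sm_scaleR sm_const sm_diff sm_K)
  fix x assume "x \<in> orbit32 (fpt (vector [1, 0, 0, 0, 0]) a1 0 0)"
  then obtain A b where Ab: "A \<in> SO" "norm b = 1" "x = orbF 1 0 a1 0 0 A b"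
    using orb_char[of 1 0 a1 0 0] by auto
  then show "(emb3 (first3 (fst x)), a1 *\<^sub>R (K (first3 (fst x)) - wedge E4 E5)) = x"
    "first3 (fst x) \<in> sphere 0 1"
    by (simp_all add: caseD_eq SO3_col_norm)
next
  fix u :: "real^3" assume u: "u \<in> sphere 0 1"
  show "first3 (fst (emb3 u, a1 *\<^sub>R (K u - wedge E4 E5))) = u" by simp
  obtain A where A: "A \<in> SO" "A *v axis 1 1 = u" using exists_SO3_col u by auto
  have "(emb3 u, a1 *\<^sub>R (K u - wedge E4 E5)) = orbF 1 0 a1 0 0 A (axis 1 1)"
    using caseD_eq[OF A(1), of "axis 1 1" a1] A by simp
  moreover have "norm (axis 1 1 :: real^2) = 1" by (simp add: norm_eq_sqrt_inner inner2 axis_def)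
  ultimately show "(emb3 u, a1 *\<^sub>R (K u - wedge E4 E5)) \<in> orbit32 (fpt (vector [1, 0, 0, 0, 0]) a1 0 0)"
    unfolding orb_char[of 1 0 a1 0 0] using A by blast
qed

definition GB :: "real \<Rightarrow> real \<Rightarrow> real \<Rightarrow> (real^3) \<times> (real^2) \<Rightarrow> (real^5) \<times> (real^5^5)" where
  "GB c s a1 p = (c *\<^sub>R emb3 (fst p) + s *\<^sub>R emb2 (snd p),
      a1 *\<^sub>R (K (fst p) - wedge (emb2 (c *\<^sub>R snd p) - emb3 (s *\<^sub>R fst p)) (emb2 (rot90 (snd p)))))"

lemma caseB_eq:
  assumes "A \<in> SO" "c * c + s * s = 1"
  shows "orbF c s a1 0 0 A b = GB c s a1 (A *v axis 1 1, b)"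
proof -
  have "wedge (emb3 (c *\<^sub>R (A *v axis 2 1) - s *\<^sub>R (A *v axis 3 1)))
       (emb3 (s *\<^sub>R (A *v axis 2 1) + c *\<^sub>R (A *v axis 3 1))) = K (A *v axis 1 1)"
    unfolding wedge_emb3 cross_rot using assms by (simp add: SO3_cross)
  then show ?thesis by (simp add: orbF_def Wform_def GB_def)
qed

lemma sm_GB: "sm (GB c s a1)"
  unfolding GB_def by (intro sm_pair sm_add sm_scaleR sm_const sm_emb3 sm_emb2 sm_fst sm_snd sm_id
     sm_diff sm_K sm_wedge sm_rot90)

lemma caseB:
  assumes "0 < c" "0 < s" "c * c + s * s = 1"
  shows "diffeomorphic_sets (orbit32 (fpt (vector [c, 0, 0, s, 0]) a1 0 0))
     (sphere (0::real^3) 1 \<times> sphere (0::real^2) 1)"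
proof (rule diffeo_intro[where F="\<lambda>x. (inverse c *\<^sub>R first3 (fst x), inverse s *\<^sub>R last2 (fst x))" and G="GB c s a1"])
  show "sm (\<lambda>x::(real^5) \<times> (real^5^5). (inverse c *\<^sub>R first3 (fst x), inverse s *\<^sub>R last2 (fst x)))"
    by (intro sm_pair sm_scaleR sm_const sm_first3 sm_last2 sm_fst sm_id)
  show "sm (GB c s a1)" by (rule sm_GB)
  fix x assume "x \<in> orbit32 (fpt (vector [c, 0, 0, s, 0]) a1 0 0)"
  then obtain A b where Ab: "A \<in> SO" "norm b = 1" "x = orbF c s a1 0 0 A b"
    using orb_char[of c s a1 0 0] by auto
  have fx: "(inverse c *\<^sub>R first3 (fst x), inverse s *\<^sub>R last2 (fst x)) = (A *v axis 1 1, b)"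
    using Ab assms by (simp add: orbF_def)
  show "GB c s a1 (inverse c *\<^sub>R first3 (fst x), inverse s *\<^sub>R last2 (fst x)) = x"
    unfolding fx using caseB_eq[OF Ab(1) assms(3)] Ab by simp
  show "(inverse c *\<^sub>R first3 (fst x), inverse s *\<^sub>R last2 (fst x)) \<in> sphere 0 1 \<times> sphere 0 1"
    unfolding fx using Ab SO3_col_norm by simp
next
  fix y :: "(real^3) \<times> (real^2)" assume y: "y \<in> sphere 0 1 \<times> sphere 0 1"
  show "(inverse c *\<^sub>R first3 (fst (GB c s a1 y)), inverse s *\<^sub>R last2 (fst (GB c s a1 y))) = y"
    using assms by (simp add: GB_def)
  have ny: "norm (fst y) = 1" "norm (snd y) = 1" using y by auto
  obtain A where A: "A \<in> SO" "A *v axis 1 1 = fst y" using exists_SO3_col[OF ny(1)] by auto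
  have "GB c s a1 y = orbF c s a1 0 0 A (snd y)"
    using caseB_eq[OF A(1) assms(3)] A by simp
  then show "GB c s a1 y \<in> orbit32 (fpt (vector [c, 0, 0, s, 0]) a1 0 0)"
    unfolding orb_char[of c s a1 0 0] using A ny by blast
qed

definition GE :: "(real^3) \<times> (real^2) \<Rightarrow> (real^5) \<times> (real^5^5)" where
  "GE p = (emb2 (snd p), K (fst p) + wedge (emb3 (fst p)) (emb2 (rot90 (snd p))))"

lemma wedge_23: "wedge (emb2 x) (emb3 y) = - wedge (emb3 y) (emb2 x)"
  by (rule wedge_swap)

lemma caseE_eq:
  assumes "A \<in> SO"
  shows "orbF 0 1 a1 a2 a3 A b = GE (A *v vector [a1, a2, - a3], b)"
  using assms by (simp add: orbF_def Wform_def GE_def mv3 wedge_emb3 SO3_cross wedge_23 algebra_simps)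

lemma sm_GE: "sm GE"
  unfolding GE_def by (intro sm_pair sm_add sm_emb3 sm_emb2 sm_fst sm_snd sm_id sm_K sm_wedge sm_rot90)

lemma GE_apply:
  assumes "norm b = 1"
  shows "first3 (snd (GE (v, b)) *v emb2 (rot90 (last2 (fst (GE (v, b)))))) = v"
  using assms by (simp add: GE_def K_emb2 wedge_mv norm1_inner)

lemma exists_SO3_map:
  assumes "norm (x::real^3) = norm y"
  shows "\<exists>A\<in>SO. A *v x = y"
proof -
  obtain T where T: "orthogonal_transformation T" "det (matrix T) = 1" "T x = y"
    using rotation_exists[of x y] assms by auto
  have "matrix T \<in> SO"
    using T by (simp add: SO_def rotation_matrix_def orthogonal_transformation_matrix)
  moreover have "matrix T *v x = y"
    using T by (simp add: matrix_works orthogonal_transformation_linear)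
  ultimately show ?thesis by blast
qed

lemma caseE:
  assumes "(a1, a2, a3) \<noteq> (0, 0, 0)"
  shows "diffeomorphic_sets (orbit32 (fpt (vector [0, 0, 0, 1, 0]) a1 a2 a3))
     (sphere (0::real^3) 1 \<times> sphere (0::real^2) 1)"
proof -
  define u0 :: "real^3" where "u0 = vector [a1, a2, - a3]"
  define na where "na = norm u0"
  have na: "na \<noteq> 0"
    using assms by (auto simp: na_def u0_def vec3_eq)
  show ?thesis
  proof (rule diffeo_intro[where F="\<lambda>x. (inverse na *\<^sub>R first3 (snd x *v emb2 (rot90 (last2 (fst x)))), last2 (fst x))"
        and G="\<lambda>p. GE (na *\<^sub>R fst p, snd p)"])
    show "sm (\<lambda>x::(real^5) \<times> (real^5^5). (inverse na *\<^sub>R first3 (snd x *v emb2 (rot90 (last2 (fst x)))), last2 (fst x)))"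
      by (intro sm_pair sm_scaleR sm_const sm_first3 sm_mv sm_snd sm_fst sm_id sm_emb2 sm_rot90 sm_last2)
    show "sm (\<lambda>p::(real^3) \<times> (real^2). GE (na *\<^sub>R fst p, snd p))"
      by (rule sm_compose[OF sm_GE]) (intro sm_pair sm_scaleR sm_const sm_fst sm_snd sm_id)
    fix x assume "x \<in> orbit32 (fpt (vector [0, 0, 0, 1, 0]) a1 a2 a3)"
    then obtain A b where Ab: "A \<in> SO" "norm b = 1" "x = orbF 0 1 a1 a2 a3 A b"
      using orb_char[of 0 1 a1 a2 a3] by auto
    have x: "x = GE (A *v u0, b)" using caseE_eq[OF Ab(1)] Ab(3) by (simp add: u0_def)
    have l: "last2 (fst x) = b" by (simp add: x GE_def)
    have fx: "(inverse na *\<^sub>R first3 (snd x *v emb2 (rot90 (last2 (fst x)))), last2 (fst x)) = (inverse na *\<^sub>R (A *v u0), b)"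
      using GE_apply[OF Ab(2), of "A *v u0"] x l by simp
    show "GE (na *\<^sub>R fst (inverse na *\<^sub>R first3 (snd x *v emb2 (rot90 (last2 (fst x)))), last2 (fst x)),
            snd (inverse na *\<^sub>R first3 (snd x *v emb2 (rot90 (last2 (fst x)))), last2 (fst x))) = x"
      unfolding fx using na x by simp
    have "norm (A *v u0) = na" using SO3_norm[OF Ab(1)] by (simp add: na_def)
    then show "(inverse na *\<^sub>R first3 (snd x *v emb2 (rot90 (last2 (fst x)))), last2 (fst x)) \<in> sphere 0 1 \<times> sphere 0 1"
      unfolding fx using Ab(2) na by (simp add: na_def)
  next
    fix y :: "(real^3) \<times> (real^2)" assume y: "y \<in> sphere 0 1 \<times> sphere 0 1"
    have ny: "norm (fst y) = 1" "norm (snd y) = 1" using y by auto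
    have e: "GE (na *\<^sub>R fst y, snd y) = GE (na *\<^sub>R fst y, snd y)" ..
    show "(inverse na *\<^sub>R first3 (snd (GE (na *\<^sub>R fst y, snd y)) *v emb2 (rot90 (last2 (fst (GE (na *\<^sub>R fst y, snd y)))))),
          last2 (fst (GE (na *\<^sub>R fst y, snd y)))) = y"
      using GE_apply[OF ny(2), of "na *\<^sub>R fst y"] na by (simp add: GE_def)
    have "norm u0 = norm (na *\<^sub>R fst y)" using ny na by (simp add: na_def)
    then obtain A where A: "A \<in> SO" "A *v u0 = na *\<^sub>R fst y" using exists_SO3_map by blast
    have "GE (na *\<^sub>R fst y, snd y) = orbF 0 1 a1 a2 a3 A (snd y)"
      using caseE_eq[OF A(1)] A(2) by (simp add: u0_def)
    then show "GE (na *\<^sub>R fst y, snd y) \<in> orbit32 (fpt (vector [0, 0, 0, 1, 0]) a1 a2 a3)"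
      unfolding orb_char[of 0 1 a1 a2 a3] using A ny by blast
  qed
qed

definition PhiA :: "real \<Rightarrow> real \<Rightarrow> real \<Rightarrow> real \<Rightarrow> real \<Rightarrow> (real^5) \<times> (real^5^5) \<Rightarrow> (real^3^3) \<times> (real^2^2)" where
  "PhiA c s a1 a2 a3 x =
    (let al = inverse c *\<^sub>R first3 (fst x);
         w = first3 (snd x *v emb2 (rot90 (inverse s *\<^sub>R last2 (fst x)))) - (a1 * s) *\<^sub>R al;
         p = a2 * s + a3 * c; q = a2 * c - a3 * s; n = p * p + q * q
     in (mk3 al (inverse n *\<^sub>R (p *\<^sub>R w - q *\<^sub>R cross3 al w)) (inverse n *\<^sub>R (q *\<^sub>R w + p *\<^sub>R cross3 al w)),
         rot2 (inverse s *\<^sub>R last2 (fst x))))"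

lemma sm_PhiA: "sm (PhiA c s a1 a2 a3)"
  unfolding PhiA_def Let_def
  by (intro sm_pair sm_mk3 sm_scaleR sm_const sm_first3 sm_fst sm_id sm_diff sm_add sm_cross sm_mv sm_snd
        sm_emb2 sm_rot90 sm_last2 sm_rot2)

lemma sm_orbit_map: "sm (\<lambda>z::(real^3^3) \<times> (real^2^2). act (blockdiag (fst z) (snd z)) p)"
  unfolding act_def
  by (intro sm_pair sm_mv sm_mm sm_transpose sm_blockdiag sm_fst sm_snd sm_id sm_const)

lemma PhiA_orbF:
  assumes A: "A \<in> SO" and b: "norm b = 1" and cs: "0 < c" "0 < s" "c * c + s * s = 1"
    and a: "(a2, a3) \<noteq> (0, 0)"
  shows "PhiA c s a1 a2 a3 (orbF c s a1 a2 a3 A b) = (A, rot2 b)"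
proof -
  define p where "p = a2 * s + a3 * c"
  define q where "q = a2 * c - a3 * s"
  define n where "n = p * p + q * q"
  have n_eq: "n = a2 * a2 + a3 * a3"
  proof -
    have "n = (a2 * a2 + a3 * a3) * (c * c + s * s)" by (simp add: n_def p_def q_def algebra_simps)
    then show ?thesis using cs by simp
  qed
  have n0: "n \<noteq> 0"
  proof
    assume "n = 0"
    then have "a2 * a2 + a3 * a3 = 0" using n_eq by simp
    then have "a2 = 0 \<and> a3 = 0" by (simp add: sum_squares_eq_zero_iff)
    then show False using a by simp
  qed
  let ?x = "orbF c s a1 a2 a3 A b"
  have f3: "inverse c *\<^sub>R first3 (fst ?x) = A *v axis 1 1" using cs by (simp add: orbF_def)
  have l2: "inverse s *\<^sub>R last2 (fst ?x) = b" using cs by (simp add: orbF_def)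
  have bb: "b \<bullet> b = 1" using b by (simp add: norm1_inner)
  have wN: "first3 (snd ?x *v emb2 (rot90 b)) - (a1 * s) *\<^sub>R (A *v axis 1 1) = p *\<^sub>R (A *v axis 2 1) + q *\<^sub>R (A *v axis 3 1)"
    using bb by (simp add: orbF_def Wform_def wedge_mv inner_add_left inner_diff_left p_def q_def algebra_simps)
  have cr: "cross3 (A *v axis 1 1) (p *\<^sub>R (A *v axis 2 1) + q *\<^sub>R (A *v axis 3 1)) = p *\<^sub>R (A *v axis 3 1) - q *\<^sub>R (A *v axis 2 1)"
    using A by (simp add: cross_add_right cross_mult_right SO3_cross)
  have e2: "p *\<^sub>R (p *\<^sub>R (A *v axis 2 1) + q *\<^sub>R (A *v axis 3 1)) - q *\<^sub>R (p *\<^sub>R (A *v axis 3 1) - q *\<^sub>R (A *v axis 2 1))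
       = n *\<^sub>R (A *v axis 2 1)"
    by (simp add: n_def algebra_simps)
  have e3: "q *\<^sub>R (p *\<^sub>R (A *v axis 2 1) + q *\<^sub>R (A *v axis 3 1)) + p *\<^sub>R (p *\<^sub>R (A *v axis 3 1) - q *\<^sub>R (A *v axis 2 1))
       = n *\<^sub>R (A *v axis 3 1)"
    by (simp add: n_def algebra_simps)
  have "PhiA c s a1 a2 a3 ?x = (mk3 (A *v axis 1 1) (A *v axis 2 1) (A *v axis 3 1), rot2 b)"
    unfolding PhiA_def Let_def f3 l2 wN[unfolded p_def q_def] cr[unfolded p_def q_def]
    using e2[unfolded n_def p_def q_def] e3[unfolded n_def p_def q_def] n0[unfolded n_def p_def q_def]
    by simp
  then show ?thesis by (simp add: mk3_eq)
qed

lemma caseA_key: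
  assumes cs: "0 < c" "0 < s" "c * c + s * s = 1" and a: "(a2, a3) \<noteq> (0, 0)"
    and AB: "(A::real^3^3) \<in> SO" "(B::real^2^2) \<in> SO"
  shows "PhiA c s a1 a2 a3 (act (blockdiag A B) (fpt (vector [c, 0, 0, s, 0]) a1 a2 a3)) = (A, B)"
  using orbit_orbF[OF AB(2)] PhiA_orbF[OF AB(1) SO2_rot2(2)[OF AB(2)] cs a] SO2_rot2(1)[OF AB(2)] by simp

lemma caseA:
  assumes cs: "0 < c" "0 < s" "c * c + s * s = 1" and a: "(a2, a3) \<noteq> (0, 0)"
  shows "diffeomorphic_sets (orbit32 (fpt (vector [c, 0, 0, s, 0]) a1 a2 a3)) G32"
proof (rule diffeo_intro[where F="PhiA c s a1 a2 a3" and G="\<lambda>z. act (blockdiag (fst z) (snd z)) (fpt (vector [c, 0, 0, s, 0]) a1 a2 a3)"])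
  show "sm (PhiA c s a1 a2 a3)" by (rule sm_PhiA)
  show "sm (\<lambda>z::(real^3^3) \<times> (real^2^2). act (blockdiag (fst z) (snd z)) (fpt (vector [c, 0, 0, s, 0]) a1 a2 a3))"
    by (rule sm_orbit_map)
  fix x assume "x \<in> orbit32 (fpt (vector [c, 0, 0, s, 0]) a1 a2 a3)"
  then obtain A B where AB: "A \<in> SO" "B \<in> SO" "x = act (blockdiag A B) (fpt (vector [c, 0, 0, s, 0]) a1 a2 a3)"
    unfolding orbit32_def by blast
  then show "act (blockdiag (fst (PhiA c s a1 a2 a3 x)) (snd (PhiA c s a1 a2 a3 x))) (fpt (vector [c, 0, 0, s, 0]) a1 a2 a3) = x"
    "PhiA c s a1 a2 a3 x \<in> G32"
    using caseA_key[OF cs a AB(1,2)] by (simp_all add: G32_def)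
next
  fix y assume "y \<in> G32"
  then obtain A B where AB: "A \<in> SO" "B \<in> SO" "y = (A, B)" unfolding G32_def by blast
  then show "PhiA c s a1 a2 a3 (act (blockdiag (fst y) (snd y)) (fpt (vector [c, 0, 0, s, 0]) a1 a2 a3)) = y"
    "act (blockdiag (fst y) (snd y)) (fpt (vector [c, 0, 0, s, 0]) a1 a2 a3) \<in> orbit32 (fpt (vector [c, 0, 0, s, 0]) a1 a2 a3)"
    using caseA_key[OF cs a AB(1,2)] unfolding orbit32_def by auto
qed

lemma SO_mult: "A \<in> SO \<Longrightarrow> B \<in> SO \<Longrightarrow> (A ** B :: real^'n^'n) \<in> SO"
  by (simp add: SO_def rotation_matrix_def orthogonal_matrix_mul det_mul)

lemma SO_transpose: "A \<in> SO \<Longrightarrow> (transpose A :: real^'n^'n) \<in> SO"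
  by (simp add: SO_def rotation_matrix_def)

lemma SO_inv: "A \<in> SO \<Longrightarrow> A ** transpose A = (mat 1 :: real^'n^'n)" "A \<in> SO \<Longrightarrow> transpose A ** A = mat 1"
  by (simp_all add: SO_def rotation_matrix_def orthogonal_matrix_def)

lemma diag1_mult: "diag1 (X ** Y) = diag1 X ** diag1 Y"
  by (simp add: diag1_def vec_eq_iff forall_3 matrix_matrix_mult_def sum_3 sum_2)

lemma diag1_transpose: "transpose (diag1 X) = diag1 (transpose X)"
  by (simp add: diag1_def vec_eq_iff forall_3 transpose_def)

lemma diag1_id: "diag1 (mat 1) = mat 1"
  by (simp add: diag1_def vec_eq_iff forall_3 mat_def)

lemma diag1_SO: "X \<in> SO \<Longrightarrow> diag1 X \<in> SO"
proof -
  assume X: "X \<in> SO"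
  have "diag1 X ** transpose (diag1 X) = mat 1" "transpose (diag1 X) ** diag1 X = mat 1"
    by (simp_all add: diag1_transpose diag1_mult[symmetric] SO_inv[OF X] diag1_id)
  moreover have "det (diag1 X) = det X"
    by (simp add: det_3 det_2 diag1_def)
  ultimately show ?thesis using X by (simp add: SO_def rotation_matrix_def orthogonal_matrix_def)
qed

definition psi :: "(real^3^3) \<times> (real^2^2) \<Rightarrow> real^3^3" where
  "psi g = fst g ** diag1 (transpose (snd g))"

definition psit :: "real \<Rightarrow> real \<Rightarrow> (real^5) \<times> (real^5^5) \<Rightarrow> real^3^3" where
  "psit a2 a3 x = (let z4 = first3 (snd x *v E4); z5 = first3 (snd x *v E5); n = a2 * a2 + a3 * a3 in
     mk3 (first3 (fst x)) (inverse n *\<^sub>R (a2 *\<^sub>R z4 + a3 *\<^sub>R z5)) (inverse n *\<^sub>R (a2 *\<^sub>R z5 - a3 *\<^sub>R z4)))"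

definition Gam :: "real \<Rightarrow> real \<Rightarrow> real \<Rightarrow> real^3^3 \<Rightarrow> (real^5) \<times> (real^5^5)" where
  "Gam a1 a2 a3 R = (emb3 (R *v axis 1 1),
     a1 *\<^sub>R (K (R *v axis 1 1) - wedge E4 E5)
     + a2 *\<^sub>R (wedge (emb3 (R *v axis 2 1)) E4 + wedge (emb3 (R *v axis 3 1)) E5)
     + a3 *\<^sub>R (wedge (emb3 (R *v axis 2 1)) E5 - wedge (emb3 (R *v axis 3 1)) E4))"

lemma sm_psit: "sm (psit a2 a3)"
  unfolding psit_def Let_def
  by (intro sm_mk3 sm_first3 sm_fst sm_id sm_scaleR sm_const sm_add sm_diff sm_mv sm_snd)

lemma L_a2: "wedge (emb3 x) (emb2 b) - wedge (emb2 (rot90 b)) (emb3 y) =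
   wedge (emb3 (b$1 *\<^sub>R x - b$2 *\<^sub>R y)) E4 + wedge (emb3 (b$2 *\<^sub>R x + b$1 *\<^sub>R y)) E5"
  by (simp add: vec_eq_iff forall_5 axis_def algebra_simps)

lemma L_a3: "wedge (emb3 x) (emb2 (rot90 b)) - wedge (emb3 y) (emb2 b) =
   wedge (emb3 (b$1 *\<^sub>R x - b$2 *\<^sub>R y)) E5 - wedge (emb3 (b$2 *\<^sub>R x + b$1 *\<^sub>R y)) E4"
  by (simp add: vec_eq_iff forall_5 axis_def algebra_simps)

lemma psi_cols:
  fixes A :: "real^3^3"
  shows "(A ** diag1 (transpose (rot2 b))) *v axis 1 1 = A *v axis 1 1"
  "(A ** diag1 (transpose (rot2 b))) *v axis 2 1 = b$1 *\<^sub>R (A *v axis 2 1) - b$2 *\<^sub>R (A *v axis 3 1)"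
  "(A ** diag1 (transpose (rot2 b))) *v axis 3 1 = b$2 *\<^sub>R (A *v axis 2 1) + b$1 *\<^sub>R (A *v axis 3 1)"
proof -
  have d: "diag1 (transpose (rot2 b)) *v axis 1 1 = vector [1, 0, 0]"
    "diag1 (transpose (rot2 b)) *v axis 2 1 = vector [0, b$1, - b$2]"
    "diag1 (transpose (rot2 b)) *v axis 3 1 = vector [0, b$2, b$1]"
    by (simp_all add: vec3_eq diag1_def matrix_vector_mult_def sum_3 axis_def transpose_def)
  show "(A ** diag1 (transpose (rot2 b))) *v axis 1 1 = A *v axis 1 1"
    "(A ** diag1 (transpose (rot2 b))) *v axis 2 1 = b$1 *\<^sub>R (A *v axis 2 1) - b$2 *\<^sub>R (A *v axis 3 1)"
    "(A ** diag1 (transpose (rot2 b))) *v axis 3 1 = b$2 *\<^sub>R (A *v axis 2 1) + b$1 *\<^sub>R (A *v axis 3 1)"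
    unfolding matrix_vector_mul_assoc[symmetric] d mv3 by (simp_all add: algebra_simps)
qed

lemma orbF_Gam:
  assumes "A \<in> SO" "norm b = 1"
  shows "orbF 1 0 a1 a2 a3 A b = Gam a1 a2 a3 (A ** diag1 (transpose (rot2 b)))"
proof -
  have 1: "wedge (emb3 (A *v axis 2 1)) (emb3 (A *v axis 3 1)) = K (A *v axis 1 1)"
    using assms by (simp add: wedge_emb3 SO3_cross)
  have 2: "wedge (emb2 b) (emb2 (rot90 b)) = wedge E4 E5"
    using assms by (simp add: wedge_E45 norm1_inner)
  show ?thesis
    unfolding orbF_def Gam_def Wform_def psi_cols
    using 1 2 L_a2[of "A *v axis 2 1" b "A *v axis 3 1"] L_a3[of "A *v axis 2 1" b "A *v axis 3 1"]
    by simp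
qed

lemma psit_Gam:
  assumes "(a2, a3) \<noteq> (0, 0)"
  shows "psit a2 a3 (Gam a1 a2 a3 R) = R"
proof -
  define n where "n = a2 * a2 + a3 * a3"
  have n0: "n \<noteq> 0" using assms by (auto simp: n_def sum_squares_eq_zero_iff)
  have E: "E4 \<bullet> E4 = 1" "E5 \<bullet> E5 = 1" "E4 \<bullet> E5 = 0" "E5 \<bullet> E4 = 0"
    by (simp_all add: inner2 axis_def)
  have z4: "first3 (snd (Gam a1 a2 a3 R) *v E4) = a2 *\<^sub>R (R *v axis 2 1) - a3 *\<^sub>R (R *v axis 3 1)"
    by (simp add: Gam_def wedge_mv K_emb2 E inner_axis_axis)
  have z5: "first3 (snd (Gam a1 a2 a3 R) *v E5) = a2 *\<^sub>R (R *v axis 3 1) + a3 *\<^sub>R (R *v axis 2 1)"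
    by (simp add: Gam_def wedge_mv K_emb2 E inner_axis_axis)
  have e2: "a2 *\<^sub>R (a2 *\<^sub>R (R *v axis 2 1) - a3 *\<^sub>R (R *v axis 3 1)) + a3 *\<^sub>R (a2 *\<^sub>R (R *v axis 3 1) + a3 *\<^sub>R (R *v axis 2 1))
     = n *\<^sub>R (R *v axis 2 1)" by (simp add: n_def algebra_simps)
  have e3: "a2 *\<^sub>R (a2 *\<^sub>R (R *v axis 3 1) + a3 *\<^sub>R (R *v axis 2 1)) - a3 *\<^sub>R (a2 *\<^sub>R (R *v axis 2 1) - a3 *\<^sub>R (R *v axis 3 1))
     = n *\<^sub>R (R *v axis 3 1)" by (simp add: n_def algebra_simps)
  have "psit a2 a3 (Gam a1 a2 a3 R) = mk3 (R *v axis 1 1) (R *v axis 2 1) (R *v axis 3 1)"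
    unfolding psit_def Let_def z4 z5 using e2[unfolded n_def] e3[unfolded n_def] n0[unfolded n_def]
    by (simp add: Gam_def)
  then show ?thesis by (simp add: mk3_eq)
qed

lemma pi_Gam:
  assumes "A \<in> SO" "B \<in> SO"
  shows "act (blockdiag A B) (fpt (vector [1, 0, 0, 0, 0]) a1 a2 a3) = Gam a1 a2 a3 (psi (A, B))"
proof -
  have "act (blockdiag A B) (fpt (vector [1, 0, 0, 0, 0]) a1 a2 a3) = orbF 1 0 a1 a2 a3 A (B *v axis 1 1)"
    using orbit_orbF[OF assms(2)] by simp
  also have "\<dots> = Gam a1 a2 a3 (A ** diag1 (transpose (rot2 (B *v axis 1 1))))"
    by (rule orbF_Gam[OF assms(1) SO2_rot2(2)[OF assms(2)]])
  also have "\<dots> = Gam a1 a2 a3 (psi (A, B))"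
    using SO2_rot2(1)[OF assms(2)] by (simp add: psi_def)
  finally show ?thesis .
qed

lemma psi_SO: "g \<in> G32 \<Longrightarrow> psi g \<in> SO"
  unfolding G32_def psi_def by (auto intro!: SO_mult diag1_SO SO_transpose)

lemma psi_fiber:
  assumes "g \<in> G32" "g' \<in> G32"
  shows "psi g = psi g' \<longleftrightarrow> (\<exists>h\<in>H_diag. g' = mult32 g h)"
proof -
  obtain A B where g: "g = (A, B)" "A \<in> SO" "B \<in> SO" using assms(1) unfolding G32_def by auto
  obtain A' B' where g': "g' = (A', B')" "A' \<in> SO" "B' \<in> SO" using assms(2) unfolding G32_def by auto
  show ?thesis
  proof
    assume e: "psi g = psi g'"
    let ?k = "transpose B ** B'"
    have k: "?k \<in> SO" using g g' by (simp add: SO_mult SO_transpose)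
    have "B ** ?k = B'" using SO_inv(1)[OF g(3)] by (simp add: matrix_mul_assoc)
    moreover have "A ** diag1 ?k = A'"
    proof -
      have "A ** diag1 ?k = (A ** diag1 (transpose B)) ** diag1 B'"
        by (simp add: diag1_mult matrix_mul_assoc)
      also have "\<dots> = (A' ** diag1 (transpose B')) ** diag1 B'"
        using e g g' by (simp add: psi_def)
      also have "\<dots> = A'"
        by (simp add: matrix_mul_assoc[symmetric] diag1_mult[symmetric] SO_inv(2)[OF g'(3)] diag1_id)
      finally show ?thesis .
    qed
    ultimately have "g' = mult32 g (diag1 ?k, ?k)" using g g' by (simp add: mult32_def)
    moreover have "(diag1 ?k, ?k) \<in> H_diag" using k unfolding H_diag_def by blast
    ultimately show "\<exists>h\<in>H_diag. g' = mult32 g h" by blast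
  next
    assume "\<exists>h\<in>H_diag. g' = mult32 g h"
    then obtain k where k: "k \<in> SO" "g' = mult32 g (diag1 k, k)" unfolding H_diag_def by blast
    have "psi g' = (A ** diag1 k) ** diag1 (transpose k ** transpose B)"
      using k g by (simp add: psi_def mult32_def matrix_transpose_mul)
    also have "\<dots> = A ** (diag1 (k ** transpose k)) ** diag1 (transpose B)"
      by (simp add: diag1_mult matrix_mul_assoc)
    also have "\<dots> = psi g" using SO_inv(1)[OF k(1)] g by (simp add: diag1_id psi_def)
    finally show "psi g = psi g'" by simp
  qed
qed

lemma pi_psit:
  assumes "(a2, a3) \<noteq> (0, 0)" "g \<in> G32"
  shows "psit a2 a3 (act (blockdiag (fst g) (snd g)) (fpt (vector [1, 0, 0, 0, 0]) a1 a2 a3)) = psi g"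
proof -
  obtain A B where g: "g = (A, B)" "A \<in> SO" "B \<in> SO" using assms(2) unfolding G32_def by auto
  show ?thesis using pi_Gam[OF g(2,3)] psit_Gam[OF assms(1)] g(1) by simp
qed

lemma pi_Gam': "g \<in> G32 \<Longrightarrow> act (blockdiag (fst g) (snd g)) (fpt (vector [1, 0, 0, 0, 0]) a1 a2 a3) = Gam a1 a2 a3 (psi g)"
  unfolding G32_def using pi_Gam by auto

lemma caseC:
  assumes a: "(a2, a3) \<noteq> (0, 0)"
  shows "diffeomorphic_quotient (orbit32 (fpt (vector [1, 0, 0, 0, 0]) a1 a2 a3)) G32 mult32 H_diag"
proof -
  define p0 where "p0 = fpt (vector [1, 0, 0, 0, 0]) a1 a2 a3"
  define pi where "pi = (\<lambda>z::(real^3^3) \<times> (real^2^2). act (blockdiag (fst z) (snd z)) p0)"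
  define M where "M = orbit32 p0"
  have M: "M = pi ` G32"
  proof (rule set_eqI, rule iffI)
    fix m assume "m \<in> M"
    then obtain A B where "A \<in> SO" "B \<in> SO" "m = act (blockdiag A B) p0" unfolding M_def orbit32_def by blast
    then have "(A, B) \<in> G32" "m = pi (A, B)" by (simp_all add: G32_def pi_def)
    then show "m \<in> pi ` G32" by blast
  next
    fix m assume "m \<in> pi ` G32"
    then obtain A B where "A \<in> SO" "B \<in> SO" "m = pi (A, B)" unfolding G32_def by blast
    then show "m \<in> M" unfolding M_def orbit32_def pi_def by auto
  qed
  have psit_pi: "\<And>g. g \<in> G32 \<Longrightarrow> psit a2 a3 (pi g) = psi g"
    unfolding pi_def p0_def using pi_psit[OF a] by blast
  have Gam_pi: "\<And>g. g \<in> G32 \<Longrightarrow> pi g = Gam a1 a2 a3 (psi g)"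
    unfolding pi_def p0_def using pi_Gam' by blast
  define Psi where "Psi = (\<lambda>m. (psit a2 a3 m, mat 1 :: real^2^2))"
  have smPsi: "sm Psi" unfolding Psi_def by (intro sm_pair sm_psit sm_const)
  have PsiG: "\<And>m. m \<in> M \<Longrightarrow> Psi m \<in> G32"
  proof -
    fix m assume "m \<in> M"
    then obtain g where g: "g \<in> G32" "m = pi g" using M by auto
    show "Psi m \<in> G32" using psit_pi[OF g(1)] g psi_SO[OF g(1)] SO_id by (simp add: Psi_def G32_def)
  qed
  show ?thesis
    unfolding diffeomorphic_quotient_def p0_def[symmetric] M_def[symmetric]
  proof (intro exI conjI)
    show "smooth_map G32 pi" unfolding pi_def by (rule sm_smooth_map[OF sm_orbit_map]) simp
    show "pi ` G32 = M" using M by simp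
    show "\<forall>g\<in>G32. \<forall>g'\<in>G32. (pi g = pi g') = (\<exists>h\<in>H_diag. g' = mult32 g h)"
    proof (intro ballI)
      fix g g' assume g: "g \<in> G32" "g' \<in> G32"
      have "pi g = pi g' \<longleftrightarrow> psi g = psi g'"
        using psit_pi[OF g(1)] psit_pi[OF g(2)] Gam_pi[OF g(1)] Gam_pi[OF g(2)] by metis
      then show "(pi g = pi g') = (\<exists>h\<in>H_diag. g' = mult32 g h)" using psi_fiber[OF g] by simp
    qed
    show "\<forall>f :: (real^3^3) \<times> (real^2^2) \<Rightarrow> real. smooth_map G32 f \<and> (\<forall>g\<in>G32. \<forall>h\<in>H_diag. f (mult32 g h) = f g) \<longrightarrow>
        (\<exists>f'. smooth_map M f' \<and> (\<forall>g\<in>G32. f' (pi g) = f g))"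
    proof (intro allI impI)
    fix f :: "(real^3^3) \<times> (real^2^2) \<Rightarrow> real"
    assume f: "smooth_map G32 f \<and> (\<forall>g\<in>G32. \<forall>h\<in>H_diag. f (mult32 g h) = f g)"
    show "\<exists>f'. smooth_map M f' \<and> (\<forall>g\<in>G32. f' (pi g) = f g)"
    proof (rule exI[of _ "\<lambda>m. f (Psi m)"], intro conjI ballI)
      fix g assume g: "g \<in> G32"
      obtain A B where AB: "g = (A, B)" "A \<in> SO" "B \<in> SO" using g unfolding G32_def by auto
      have h: "(diag1 (transpose B), transpose B) \<in> H_diag"
        unfolding H_diag_def using SO_transpose[OF AB(3)] by blast
      have "mult32 g (diag1 (transpose B), transpose B) = (psi g, mat 1)"
        using AB SO_inv(1)[OF AB(3)] by (simp add: mult32_def psi_def)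
      then have "f (psi g, mat 1) = f g" using f g h by metis
      then show "(\<lambda>m. f (Psi m)) (pi g) = f g" using psit_pi[OF g] by (simp add: Psi_def)
    next
      show "smooth_map M (\<lambda>m. f (Psi m))"
        unfolding smooth_map_def
      proof
        fix m assume m: "m \<in> M"
        obtain U F where UF: "open U" "Psi m \<in> U" "\<forall>k. Ck_on k U F" "\<forall>y\<in>G32 \<inter> U. F y = f y"
          using f PsiG[OF m] unfolding smooth_map_def by meson
        define V where "V = Psi -` U"
        have oV: "open V"
          using continuous_on_open_vimage[of UNIV Psi] sm_continuous[OF smPsi] UF(1) by (simp add: V_def)
        have ck: "\<forall>k. Ck_on k V (\<lambda>x. F (Psi x))"
        proof
          fix k
          have "Ck_on k V Psi"
            using Ck_restrict[OF oV subset_UNIV open_UNIV, of k Psi] smPsi unfolding sm_def by blast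
          then show "Ck_on k V (\<lambda>x. F (Psi x))"
            using Ck_compose[OF oV UF(1), of Psi k F] UF(3) by (auto simp: V_def)
        qed
        have eq: "\<forall>y\<in>M \<inter> V. F (Psi y) = f (Psi y)"
          using UF(4) PsiG by (auto simp: V_def)
        show "\<exists>U g. open U \<and> m \<in> U \<and> (\<forall>k. Ck_on k U g) \<and> (\<forall>y\<in>M \<inter> U. g y = f (Psi y))"
          using oV ck eq UF(2) by (auto simp: V_def)
      qed
    qed
    qed
  qed
qed

lemma exists_SO_map:
  assumes "norm (x::real^'n) = norm y" "2 \<le> CARD('n)"
  shows "\<exists>A\<in>SO. A *v x = y"
proof -
  obtain T where T: "orthogonal_transformation T" "det (matrix T) = 1" "T x = y"
    using rotation_exists[of x y] assms by auto
  have "matrix T \<in> SO"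
    using T by (simp add: SO_def rotation_matrix_def orthogonal_transformation_matrix)
  moreover have "matrix T *v x = y"
    using T by (simp add: matrix_works orthogonal_transformation_linear)
  ultimately show ?thesis by blast
qed

lemma first_part:
  "\<exists>A B x1 x4. A \<in> SO \<and> B \<in> SO \<and> x1 \<ge> 0 \<and> x4 \<ge> 0 \<and>
     fst (act (blockdiag A B) p) = vector [x1, 0, 0, x4, 0]"
proof -
  define x where "x = fst p"
  obtain A :: "real^3^3" where A: "A \<in> SO" "A *v first3 x = norm (first3 x) *\<^sub>R axis 1 1"
    using exists_SO_map[of "first3 x" "norm (first3 x) *\<^sub>R axis 1 1"] by auto
  obtain B :: "real^2^2" where B: "B \<in> SO" "B *v last2 x = norm (last2 x) *\<^sub>R axis 1 1"
    using exists_SO_map[of "last2 x" "norm (last2 x) *\<^sub>R axis 1 1"] by auto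
  have "fst (act (blockdiag A B) p) = vector [norm (first3 x), 0, 0, norm (last2 x), 0]"
    by (simp add: act_def x_def[symmetric] bd_mv A B vec5_eq axis_def)
  then show ?thesis using A B
    by (intro exI[of _ A] exI[of _ B] exI[of _ "norm (first3 x)"] exI[of _ "norm (last2 x)"]) auto
qed

theorem lemma4p4:
  shows "(\<forall>p\<in>ASD_bundle. \<exists>A B x1 x4. A \<in> SO \<and> B \<in> SO \<and> x1 \<ge> 0 \<and> x4 \<ge> 0 \<and>
            fst (act (blockdiag A B) p) = vector [x1, 0, 0, x4, 0])
   \<and> (\<forall>x1 x4 a1 a2 a3 :: real. x1 \<ge> 0 \<and> x4 \<ge> 0 \<and> x1\<^sup>2 + x4\<^sup>2 = 1 \<longrightarrow>
        (let Orb = orbit32 (fpt (vector [x1, 0, 0, x4, 0]) a1 a2 a3) in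
          (0 < x1 \<and> x1 < 1 \<and> (a2, a3) \<noteq> (0, 0) \<longrightarrow> diffeomorphic_sets Orb G32)
        \<and> (0 < x1 \<and> x1 < 1 \<and> (a2, a3) = (0, 0) \<longrightarrow>
             diffeomorphic_sets Orb (sphere (0::real^3) 1 \<times> sphere (0::real^2) 1))
        \<and> (x1 = 1 \<and> (a2, a3) \<noteq> (0, 0) \<longrightarrow> diffeomorphic_quotient Orb G32 mult32 H_diag)
        \<and> (x1 = 1 \<and> (a2, a3) = (0, 0) \<longrightarrow> diffeomorphic_sets Orb (sphere (0::real^3) 1))
        \<and> (x1 = 0 \<and> (a1, a2, a3) \<noteq> (0, 0, 0) \<longrightarrow>
             diffeomorphic_sets Orb (sphere (0::real^3) 1 \<times> sphere (0::real^2) 1))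
        \<and> (x1 = 0 \<and> (a1, a2, a3) = (0, 0, 0) \<longrightarrow> diffeomorphic_sets Orb (sphere (0::real^2) 1))))"
proof (intro conjI ballI allI impI)
  fix p :: "(real^5) \<times> (real^5^5)"
  show "\<exists>A B x1 x4. A \<in> SO \<and> B \<in> SO \<and> x1 \<ge> 0 \<and> x4 \<ge> 0 \<and>
            fst (act (blockdiag A B) p) = vector [x1, 0, 0, x4, 0]"
    by (rule first_part)
next
  fix x1 x4 a1 a2 a3 :: real
  assume h: "x1 \<ge> 0 \<and> x4 \<ge> 0 \<and> x1\<^sup>2 + x4\<^sup>2 = 1"
  have hs: "x1 * x1 + x4 * x4 = 1" using h by (simp add: power2_eq_square)
  have x4pos: "0 < x4" if "0 < x1" "x1 < 1"
  proof -
    have "x1 * x1 < 1 * 1" using that by (intro mult_strict_mono) auto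
    then have "x4 \<noteq> 0" using hs by auto
    then show ?thesis using h by simp
  qed
  show "let Orb = orbit32 (fpt (vector [x1, 0, 0, x4, 0]) a1 a2 a3) in
          (0 < x1 \<and> x1 < 1 \<and> (a2, a3) \<noteq> (0, 0) \<longrightarrow> diffeomorphic_sets Orb G32)
        \<and> (0 < x1 \<and> x1 < 1 \<and> (a2, a3) = (0, 0) \<longrightarrow>
             diffeomorphic_sets Orb (sphere (0::real^3) 1 \<times> sphere (0::real^2) 1))
        \<and> (x1 = 1 \<and> (a2, a3) \<noteq> (0, 0) \<longrightarrow> diffeomorphic_quotient Orb G32 mult32 H_diag)
        \<and> (x1 = 1 \<and> (a2, a3) = (0, 0) \<longrightarrow> diffeomorphic_sets Orb (sphere (0::real^3) 1))
        \<and> (x1 = 0 \<and> (a1, a2, a3) \<noteq> (0, 0, 0) \<longrightarrow>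
             diffeomorphic_sets Orb (sphere (0::real^3) 1 \<times> sphere (0::real^2) 1))
        \<and> (x1 = 0 \<and> (a1, a2, a3) = (0, 0, 0) \<longrightarrow> diffeomorphic_sets Orb (sphere (0::real^2) 1))"
    unfolding Let_def
  proof (intro conjI impI)
    assume a: "0 < x1 \<and> x1 < 1 \<and> (a2, a3) \<noteq> (0, 0)"
    have "0 < x4" using a x4pos by simp
    then show "diffeomorphic_sets (orbit32 (fpt (vector [x1, 0, 0, x4, 0]) a1 a2 a3)) G32"
      using caseA[of x1 x4 a2 a3 a1] a hs by simp
  next
    assume a: "0 < x1 \<and> x1 < 1 \<and> (a2, a3) = (0, 0)"
    have "0 < x4" using a x4pos by simp
    then show "diffeomorphic_sets (orbit32 (fpt (vector [x1, 0, 0, x4, 0]) a1 a2 a3))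
       (sphere (0::real^3) 1 \<times> sphere (0::real^2) 1)"
      using caseB[of x1 x4 a1] a hs by simp
  next
    assume a: "x1 = 1 \<and> (a2, a3) \<noteq> (0, 0)"
    then have "x4 = 0" using hs by simp
    then show "diffeomorphic_quotient (orbit32 (fpt (vector [x1, 0, 0, x4, 0]) a1 a2 a3)) G32 mult32 H_diag"
      using caseC[of a2 a3 a1] a by simp
  next
    assume a: "x1 = 1 \<and> (a2, a3) = (0, 0)"
    then have "x4 = 0" using hs by simp
    then show "diffeomorphic_sets (orbit32 (fpt (vector [x1, 0, 0, x4, 0]) a1 a2 a3)) (sphere (0::real^3) 1)"
      using caseD[of a1] a by simp
  next
    assume a: "x1 = 0 \<and> (a1, a2, a3) \<noteq> (0, 0, 0)"
    then have "x4 * x4 = 1" using hs by simp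
    then have "x4 = 1" using h by (metis abs_of_nonneg mult_cancel_right1 real_sqrt_abs real_sqrt_mult_self power2_eq_square abs_1 real_sqrt_one)
    then show "diffeomorphic_sets (orbit32 (fpt (vector [x1, 0, 0, x4, 0]) a1 a2 a3))
       (sphere (0::real^3) 1 \<times> sphere (0::real^2) 1)"
      using caseE[of a1 a2 a3] a by simp
  next
    assume a: "x1 = 0 \<and> (a1, a2, a3) = (0, 0, 0)"
    then have "x4 * x4 = 1" using hs by simp
    then have "x4 = 1" using h by (metis abs_of_nonneg mult_cancel_right1 real_sqrt_abs real_sqrt_mult_self power2_eq_square abs_1 real_sqrt_one)
    then show "diffeomorphic_sets (orbit32 (fpt (vector [x1, 0, 0, x4, 0]) a1 a2 a3)) (sphere (0::real^2) 1)"
      using caseF a by simp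
  qed
qed

end
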